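(* Let $n\ge 0$ and for a permutation $\sigma=\sigma_1\cdots\sigma_n\in\mathfrak{S}_n$ let $\operatorname{inv}(\sigma)$, $\operatorname{iasc}(\sigma)$, $\operatorname{isol}(\sigma)$, $\operatorname{des}(\sigma)$ and $\operatorname{RLmin}(\sigma)$ be as defined in the context. Define the cycle $q$-inv-Roselle polynomials \[ F^{\mathrm{inv}}_n(q;x,y,z\mid\beta)=\sum_{\sigma\in\mathfrak{S}_n} q^{\operatorname{inv}(\sigma)}x^{\operatorname{iasc}(\sigma)}z^{\operatorname{isol}(\sigma)}y^{\operatorname{des}(\sigma)-1}\beta^{\operatorname{RLmin}(\sigma)}\quad(n\ge1),\qquad F^{\mathrm{inv}}_0=1. \] Then, as formal power series in $u$, \[ \sum_{n\ge 0}F^{\mathrm{inv}}_n(q;x,y,z\mid\beta)\frac{u^n}{(q;q)_n} =\prod_{k=0}^{\infty}\frac{1-x^{-1}y\,e_q\big((x-y)uq^{k+1}\big)}{1-\beta uq^k(z-y)-x^{-1}y\big(1+\beta uq^k(x-z)\big)\,e_q\big((x-y)uq^{k+1}\big)}. \]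
   Context: $\mathfrak{S}_n$ is the set of permutations of $\{1,\dots,n\}$, written in one-line notation $\sigma=\sigma_1\cdots\sigma_n$, with the convention $\sigma_0=\sigma_{n+1}=0$. For $0\le i\le n$, $i$ is a descent if $\sigma_i>\sigma_{i+1}$ and an ascent otherwise; $\operatorname{des}(\sigma)$ and $\operatorname{asc}(\sigma)$ are their numbers. $\operatorname{inv}(\sigma)=\#\{(i,j):1\le i<j\le n,\ \sigma_i>\sigma_j\}$. A right-to-left minimum of $\sigma$ is an entry $\sigma_i$ with $\sigma_i<\sigma_j$ for all $j>i$; $\operatorname{RLmin}(\sigma)$ is their number. Place a bar at the beginning of $\sigma$ and a bar immediately after each right-to-left minimum; an entry $\sigma_j$ is isolated if it is the only entry between two consecutive bars, and $\operatorname{isol}(\sigma)$ is the number of isolated entries. An index $0\le i\le n-1$ is a non-isolated ascent if $i$ is an ascent and $\sigma_{i+1}$ is not isolated; $\operatorname{iasc}(\sigma)$ is their number. Here $(q;q)_n=\prod_{i=1}^n(1-q^i)$ and $e_q(u)=\sum_{n\ge0}u^n/(q;q)_n$. *)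

theory Defs
  imports Complex_Main "HOL-Computational_Algebra.Formal_Power_Series"
    "HOL-Combinatorics.Multiset_Permutations"
begin

text \<open>A permutation of {1..n} is a list s (one-line notation, s_i = s!(i-1)).
  ent s i is s_i with the convention s_0 = s_(n+1) = 0.\<close>
definition ent :: "nat list \<Rightarrow> nat \<Rightarrow> nat" where
  "ent s i = (if 1 \<le> i \<and> i \<le> length s then s ! (i - 1) else 0)"

definition is_descent :: "nat list \<Rightarrow> nat \<Rightarrow> bool" where
  "is_descent s i \<longleftrightarrow> ent s i > ent s (Suc i)"

definition is_ascent :: "nat list \<Rightarrow> nat \<Rightarrow> bool" where
  "is_ascent s i \<longleftrightarrow> \<not> is_descent s i"

definition des :: "nat list \<Rightarrow> nat" where
  "des s = card {i. i \<le> length s \<and> is_descent s i}"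

definition inv :: "nat list \<Rightarrow> nat" where
  "inv s = card {(i, j). 1 \<le> i \<and> i < j \<and> j \<le> length s \<and> ent s i > ent s j}"

definition is_RLmin :: "nat list \<Rightarrow> nat \<Rightarrow> bool" where
  "is_RLmin s i \<longleftrightarrow> 1 \<le> i \<and> i \<le> length s \<and>
     (\<forall>j. i < j \<and> j \<le> length s \<longrightarrow> ent s i < ent s j)"

definition RLmin :: "nat list \<Rightarrow> nat" where
  "RLmin s = card {i. is_RLmin s i}"

text \<open>Bars: a bar at position 0 (beginning) and a bar immediately after each
  right-to-left minimum; "bar at position i" means a bar between s_i and s_(i+1).\<close>
definition bars :: "nat list \<Rightarrow> nat set" where
  "bars s = {0} \<union> {i. is_RLmin s i}"

text \<open>entry at position j is isolated iff it is the only entry between two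
  consecutive bars, i.e. there are bars at j-1 and at j\<close>
definition isolated :: "nat list \<Rightarrow> nat \<Rightarrow> bool" where
  "isolated s j \<longleftrightarrow> 1 \<le> j \<and> j \<le> length s \<and> j - 1 \<in> bars s \<and> j \<in> bars s"

definition isol :: "nat list \<Rightarrow> nat" where
  "isol s = card {j. isolated s j}"

definition iasc :: "nat list \<Rightarrow> nat" where
  "iasc s = card {i. i < length s \<and> is_ascent s i \<and> \<not> isolated s (Suc i)}"

definition qpoch :: "complex \<Rightarrow> nat \<Rightarrow> complex" where
  "qpoch q n = (\<Prod>i=1..n. 1 - q ^ i)"

definition Finv :: "complex \<Rightarrow> complex \<Rightarrow> complex \<Rightarrow> complex \<Rightarrow> complex \<Rightarrow> nat \<Rightarrow> complex" where
  "Finv q x y z b n = (if n = 0 then 1 else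
     (\<Sum>s\<in>permutations_of_set {1..n}.
        q ^ inv s * x ^ iasc s * z ^ isol s * y ^ (des s - 1) * b ^ RLmin s))"

definition eq_fps :: "complex \<Rightarrow> complex \<Rightarrow> complex fps" where
  "eq_fps q c = Abs_fps (\<lambda>n. c ^ n / qpoch q n)"

definition prod_factor :: "complex \<Rightarrow> complex \<Rightarrow> complex \<Rightarrow> complex \<Rightarrow> complex \<Rightarrow> nat \<Rightarrow> complex fps" where
  "prod_factor q x y z b k =
     (let E = eq_fps q ((x - y) * q ^ (k + 1)) in
      (1 - fps_const (y / x) * E) /
      (1 - fps_const (b * q ^ k * (z - y)) * fps_X
         - fps_const (y / x) * (1 + fps_const (b * q ^ k * (x - z)) * fps_X) * E))"

end

theory Submission
  imports Defs
begin


definition cnt :: "('a \<Rightarrow> 'a \<Rightarrow> bool) \<Rightarrow> 'a list \<Rightarrow> nat" where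
  "cnt P xs = card {i. Suc i < length xs \<and> P (xs!i) (xs!Suc i)}"

lemma cnt_Nil[simp]: "cnt P [] = 0" and cnt_single[simp]: "cnt P [a] = 0"
  by (auto simp: cnt_def)

lemma cnt_Cons2[simp]: "cnt P (a#b#l) = of_bool (P a b) + cnt P (b#l)"
proof -
  have "{i. Suc i < length (a#b#l) \<and> P ((a#b#l)!i) ((a#b#l)!Suc i)} =
     {i. i = 0 \<and> P a b} \<union> Suc ` {i. Suc i < length (b#l) \<and> P ((b#l)!i) ((b#l)!Suc i)}"
  proof (intro set_eqI iffI)
    fix i assume "i \<in> {i. Suc i < length (a#b#l) \<and> P ((a#b#l)!i) ((a#b#l)!Suc i)}"
    then show "i \<in> {i. i = 0 \<and> P a b} \<union> Suc ` {i. Suc i < length (b#l) \<and> P ((b#l)!i) ((b#l)!Suc i)}"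
      by (cases i) auto
  qed auto
  moreover have "{i. i = 0 \<and> P a b} \<inter> Suc ` {i. Suc i < length (b#l) \<and> P ((b#l)!i) ((b#l)!Suc i)} = {}" by auto
  ultimately show ?thesis unfolding cnt_def
    by (simp add: card_Un_disjoint card_image)
qed

lemma cnt_append: "cnt P (xs @ y # ys) = cnt P (xs @ [y]) + cnt P (y # ys)"
proof (induction xs)
  case Nil then show ?case by simp
next
  case (Cons a xs) then show ?case by (cases xs) auto
qed

lemma cnt_cong_adj:
  assumes "\<And>i. Suc i < length l \<Longrightarrow> P (l!i) (l!Suc i) = Q (l!i) (l!Suc i)"
  shows "cnt P l = cnt Q l"
  unfolding cnt_def using assms by (metis (no_types, lifting))

lemma cnt_map: "cnt P (map f l) = cnt (\<lambda>a b. P (f a) (f b)) l"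
  unfolding cnt_def by (rule arg_cong[where f=card]) auto

lemma cnt_hd_cong: "P a b = P a' b \<Longrightarrow> cnt P (a#b#l) = cnt P (a'#b#l)"
  by simp

lemma cnt_compl: "cnt P l + cnt (\<lambda>a b. \<not> P a b) l = length l - 1"
proof (induction l rule: induct_list012)
  case (3 x y zs) then show ?case by auto
qed auto

lemma ent_eq: "i \<le> length s + 1 \<Longrightarrow> ent s i = (0#s@[0])!i"
  unfolding ent_def by (cases i) (auto simp: nth_append)

lemma ent_big: "i > length s \<Longrightarrow> ent s i = 0"
  unfolding ent_def by auto

lemma des_cnt: "des s = cnt (\<lambda>a b. b < a) (0#s@[0])"
  unfolding des_def cnt_def is_descent_def
  by (rule arg_cong[where f=card]) (auto simp: ent_eq)

lemma cnt_snoc: "l \<noteq> [] \<Longrightarrow> cnt P (l@[y]) = cnt P l + of_bool (P (last l) y)"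
proof (induction l)
  case (Cons a l) then show ?case by (cases l) auto
qed simp

lemma ent_app1: "i \<le> length w \<Longrightarrow> ent (w@m#t) i = ent w i"
  unfolding ent_def by (auto simp: nth_append)
lemma ent_app2: "ent (w@m#t) (Suc (length w)) = m"
  unfolding ent_def by (auto simp: nth_append)
lemma ent_app3: "j \<ge> 1 \<Longrightarrow> ent (w@m#t) (Suc (length w + j)) = ent t j"
  unfolding ent_def by (auto simp: nth_append)

lemma ent_pos: "0 \<notin> set s \<Longrightarrow> 1 \<le> i \<Longrightarrow> i \<le> length s \<Longrightarrow> ent s i > 0"
proof -
  assume a: "0 \<notin> set s" "1 \<le> i" "i \<le> length s"
  then have "s!(i-1) \<in> set s" by (intro nth_mem) auto
  then have "s!(i-1) \<noteq> 0" using a(1) by metis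
  then show ?thesis using a by (simp add: ent_def)
qed

lemma ent_in: "1 \<le> i \<Longrightarrow> i \<le> length s \<Longrightarrow> ent s i \<in> set s"
  unfolding ent_def by auto

locale split3 =
  fixes w t :: "nat list" and m :: nat
  assumes mw: "\<forall>a\<in>set w. m < a" and mt: "\<forall>a\<in>set t. m < a" and m0: "0 < m"
begin

lemma RL_app: "is_RLmin (w@m#t) i \<longleftrightarrow> (i = Suc (length w) \<or> (i > Suc (length w) \<and> is_RLmin t (i - Suc (length w))))"
proof -
  let ?p = "Suc (length w)"
  consider "i \<le> length w" | "i = ?p" | "i > ?p" by linarith
  then show ?thesis
  proof cases
    case 1
    show ?thesis
    proof
      assume "is_RLmin (w@m#t) i"
      then have "i \<ge> 1" "ent (w@m#t) i < ent (w@m#t) ?p"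
        unfolding is_RLmin_def using 1 by auto
      moreover have "ent (w@m#t) i \<in> set w" using 1 calculation(1)
        by (simp add: ent_app1 ent_in)
      ultimately show "i = ?p \<or> (i > ?p \<and> is_RLmin t (i - ?p))"
        using mw by (auto simp: ent_app2)
    next
      assume "i = ?p \<or> (i > ?p \<and> is_RLmin t (i - ?p))"
      then show "is_RLmin (w@m#t) i" using 1 by (elim disjE) simp_all
    qed
  next
    case 2
    have "ent (w@m#t) 
       ?p < ent (w@m#t) j" if "?p < j" "j \<le> length (w@m#t)" for j
    proof -
      define k where "k = j - ?p"
      have k: "j = ?p + k" "k \<ge> 1" using that unfolding k_def by auto
      then have "ent (w@m#t) j = ent t k" by (simp add: ent_app3)
      moreover have "ent t k \<in> set t" using k that by (intro ent_in) auto
      ultimately show ?thesis using mt by (simp add: ent_app2)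
    qed
    then show ?thesis using 2 unfolding is_RLmin_def by auto
  next
    case 3
    define k where "k = i - ?p"
    have k: "i = ?p + k" "k \<ge> 1" using 3 unfolding k_def by auto
    have "(\<forall>j. i < j \<and> j \<le> length (w@m#t) \<longrightarrow> ent (w@m#t) i < ent (w@m#t) j) \<longleftrightarrow>
          (\<forall>j. k < j \<and> j \<le> length t \<longrightarrow> ent t k < ent t j)"
    proof
      assume H: "\<forall>j. i < j \<and> j \<le> length (w@m#t) \<longrightarrow> ent (w@m#t) i < ent (w@m#t) j"
      show "\<forall>j. k < j \<and> j \<le> length t \<longrightarrow> ent t k < ent t j"
      proof (intro allI impI)
        fix j assume "k < j \<and> j \<le> length t"
        then show "ent t k < ent t j" using H[rule_format, of "?p + j"] k by (simp add: ent_app3)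
      qed
    next
      assume H: "\<forall>j. k < j \<and> j \<le> length t \<longrightarrow> ent t k < ent t j"
      show "\<forall>j. i < j \<and> j \<le> length (w@m#t) \<longrightarrow> ent (w@m#t) i < ent (w@m#t) j"
      proof (intro allI impI)
        fix j assume j: "i < j \<and> j \<le> length (w@m#t)"
        define l where "l = j - ?p"
        have "j = ?p + l" "l > k" using k j unfolding l_def by auto
        then show "ent (w@m#t) i < ent (w@m#t) j" using H[rule_format, of l] k j by (simp add: ent_app3)
      qed
    qed
    moreover have "(1 \<le> i \<and> i \<le> length (w@m#t)) = (1 \<le> k \<and> k \<le> length t)" using k by auto
    ultimately have "is_RLmin t (i - ?p) = is_RLmin (w@m#t) i"
      unfolding k_def[symmetric] is_RLmin_def by blast
    then show ?thesis using 3 by auto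
  qed
qed

lemma RLmin_app: "RLmin (w@m#t) = Suc (RLmin t)"
proof -
  let ?p = "Suc (length w)"
  have "{i. is_RLmin (w@m#t) i} = insert ?p ((\<lambda>i. ?p + i) ` {i. is_RLmin t i})"
  proof (intro set_eqI iffI)
    fix i assume "i \<in> {i. is_RLmin (w@m#t) i}"
    then have "i = ?p \<or> (i > ?p \<and> is_RLmin t (i - ?p))" by (simp add: RL_app)
    then show "i \<in> insert ?p ((\<lambda>i. ?p + i) ` {i. is_RLmin t i})"
      by (auto simp: image_iff intro!: bexI[where x="i - ?p"])
  next
    fix i assume "i \<in> insert ?p ((\<lambda>i. ?p + i) ` {i. is_RLmin t i})"
    then consider "i = ?p" | x where "i = ?p + x" "is_RLmin t x" by auto
    then show "i \<in> {i. is_RLmin (w@m#t) i}"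
    proof cases
      case 1 then show ?thesis by (simp add: RL_app)
    next
      case 2
      then have "x \<ge> 1" unfolding is_RLmin_def by simp
      then show ?thesis using 2 by (simp add: RL_app)
    qed
  qed
  moreover have "?p \<notin> (\<lambda>i. ?p + i) ` {i. is_RLmin t i}" by (auto simp: is_RLmin_def)
  moreover have "finite {i. is_RLmin t i}" unfolding is_RLmin_def by auto
  ultimately show ?thesis unfolding RLmin_def by (simp add: card_image inj_on_def)
qed

end

definition rf :: "nat list \<Rightarrow> bool list" where
  "rf s = map (is_RLmin s) [1..<Suc (length s)]"

definition Zl :: "nat list \<Rightarrow> (nat \<times> bool) list" where
  "Zl s = zip (0#s) (True # rf s)"

lemma length_rf[simp]: "length (rf s) = length s" by (simp add: rf_def del: upt_Suc)
lemma length_Zl[simp]: "length (Zl s) = Suc (length s)" by (simp add: Zl_def)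

lemma rf_nth: "k < length s \<Longrightarrow> rf s ! k = is_RLmin s (Suc k)"
  unfolding rf_def by (simp del: upt_Suc)

lemma Zl_nth: "i \<le> length s \<Longrightarrow> Zl s ! i = (ent s i, i \<in> bars s)"
proof (cases i)
  case 0 then show ?thesis by (simp add: Zl_def bars_def ent_def)
next
  case (Suc k)
  assume "i \<le> length s"
  then have "k < length s" using Suc by simp
  then show ?thesis using Suc by (simp add: Zl_def bars_def ent_def rf_nth is_RLmin_def)
qed

lemma isol_cnt: "isol s = cnt (\<lambda>a b. snd a \<and> snd b) (Zl s)"
proof -
  have "{j. isolated s j} = Suc ` {i. Suc i < length (Zl s) \<and> snd (Zl s ! i) \<and> snd (Zl s ! Suc i)}"
  proof (intro set_eqI iffI)
    fix j assume "j \<in> {j. isolated s j}"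
    then have j: "1 \<le> j" "j \<le> length s" "j - 1 \<in> bars s" "j \<in> bars s" unfolding isolated_def by auto
    then have "j = Suc (j - 1)" by simp
    moreover have "Zl s ! (j-1) = (ent s (j-1), j - 1 \<in> bars s)" "Zl s ! Suc (j-1) = (ent s j, j \<in> bars s)"
      using j by (simp_all add: Zl_nth)
    ultimately show "j \<in> Suc ` {i. Suc i < length (Zl s) \<and> snd (Zl s ! i) \<and> snd (Zl s ! Suc i)}"
      using j by (intro image_eqI[where x="j-1"]) auto
  next
    fix j assume "j \<in> Suc ` {i. Suc i < length (Zl s) \<and> snd (Zl s ! i) \<and> snd (Zl s ! Suc i)}"
    then obtain i where i: "j = Suc i" "i < length s" "snd (Zl s ! i)" "snd (Zl s ! Suc i)" by auto
    then have "i \<in> bars s" "Suc i \<in> bars s" by (simp_all add: Zl_nth)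
    then show "j \<in> {j. isolated s j}" using i unfolding isolated_def by auto
  qed
  then show ?thesis unfolding isol_def cnt_def by (simp add: card_image)
qed

lemma iasc_cnt: "iasc s = cnt (\<lambda>a b. \<not> fst b < fst a \<and> \<not> (snd a \<and> snd b)) (Zl s)"
proof -
  have "\<And>i. i < length s \<Longrightarrow> (is_ascent s i \<and> \<not> isolated s (Suc i)) =
     (\<not> fst (Zl s ! Suc i) < fst (Zl s ! i) \<and> \<not> (snd (Zl s ! i) \<and> snd (Zl s ! Suc i)))"
  proof -
    fix i assume i: "i < length s"
    have "Zl s ! i = (ent s i, i \<in> bars s)" "Zl s ! Suc i = (ent s (Suc i), Suc i \<in> bars s)"
      using i by (simp_all add: Zl_nth)
    moreover have "isolated s (Suc i) = (i \<in> bars s \<and> Suc i \<in> bars s)"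
      using i unfolding isolated_def by simp
    ultimately show "?thesis i" unfolding is_ascent_def is_descent_def by simp
  qed
  then show ?thesis unfolding iasc_def cnt_def
    by (intro arg_cong[where f=card] Collect_cong) auto
qed

context split3 begin

lemma rf_app: "rf (w@m#t) = replicate (length w) False @ True # rf t"
proof (rule nth_equalityI)
  fix i assume "i < length (rf (w@m#t))"
  then have i: "i < length w + Suc (length t)" by simp
  have "rf (w@m#t) ! i = is_RLmin (w@m#t) (Suc i)" using i by (simp add: rf_nth)
  also have "\<dots> = (replicate (length w) False @ True # rf t) ! i"
  proof (cases "i < length w")
    case True then show ?thesis by (simp add: RL_app nth_append)
  next
    case False
    then have e: "Suc (i - Suc (length w)) = i - length w" if "i \<noteq> length w" using that by simp
    show ?thesis using i False
      by (cases "i = length w") (auto simp: RL_app nth_append rf_nth nth_Cons' e)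
  qed
  finally show "rf (w@m#t) ! i = (replicate (length w) False @ True # rf t) ! i" .
qed simp

lemma Zl_app: "Zl (w@m#t) = map (\<lambda>v. (v, v = 0)) (0#w) @ (m,True) # zip t (rf t)"
proof -
  have "0 \<notin> set w" using mw by auto
  then have "zip (0#w) (True # replicate (length w) False) = map (\<lambda>v. (v, v = 0)) (0#w)"
    by (induction w) auto
  then show ?thesis unfolding Zl_def rf_app
    by (simp add: zip_append)
qed

end


lemma cnt_Cons_cong: "(\<And>b. b \<in> set l \<Longrightarrow> P x b = P x' b) \<Longrightarrow> cnt P (x#l) = cnt P (x'#l)"
  by (cases l) auto

lemma cnt_False: "cnt (\<lambda>a b. False) l = 0"
  unfolding cnt_def by simp

lemma Zl_Cons0: "Zl t = (0,True) # zip t (rf t)"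
  unfolding Zl_def by simp

lemma des_split: "0 \<notin> set w \<Longrightarrow> des w = cnt (\<lambda>a b. b < a) (0#w) + of_bool (w \<noteq> [])"
proof -
  assume w0: "0 \<notin> set w"
  have "des w = cnt (\<lambda>a b. b < a) ((0#w)@[0])" by (simp add: des_cnt)
  also have "\<dots> = cnt (\<lambda>a b. b < a) (0#w) + of_bool (0 < last (0#w))" by (rule cnt_snoc) simp
  also have "0 < last (0#w) \<longleftrightarrow> w \<noteq> [] \<and> 0 < last w" by simp
  also have "\<dots> \<longleftrightarrow> w \<noteq> []" using w0 by (metis gr0I last_in_set)
  finally show ?thesis by simp
qed

context split3 begin

lemma last_w: "w \<noteq> [] \<Longrightarrow> m < last w" using mw by simp
lemma w0: "0 \<notin> set w" using mw by auto

lemma des_app: "des (w@m#t) = des w + (if t = [] then 1 else des t)"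
proof -
  let ?D = "\<lambda>a b. (b::nat) < a"
  have "des (w@m#t) = cnt ?D ((0#w) @ m # (t@[0]))" by (simp add: des_cnt)
  also have "\<dots> = cnt ?D ((0#w)@[m]) + cnt ?D (m#t@[0])" by (rule cnt_append)
  also have "cnt ?D ((0#w)@[m]) = cnt ?D (0#w) + of_bool (m < last (0#w))" by (rule cnt_snoc) simp
  also have "of_bool (m < last (0#w)) = (of_bool (w \<noteq> []) :: nat)" using last_w by auto
  also have "cnt ?D (0#w) + of_bool (w \<noteq> []) = des w" by (simp add: des_split[OF w0])
  also have "cnt ?D (m#t@[0]) = (if t = [] then 1 else des t)"
  proof (cases t)
    case Nil then show ?thesis using m0 by simp
  next
    case (Cons a t')
    then have "a > m" using mt by simp
    then show ?thesis using Cons by (simp add: des_cnt)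
  qed
  finally show ?thesis .
qed

lemma g_map: "map (\<lambda>v. (v, v = 0)) (0#w) \<noteq> []" by simp

lemma iasc_app: "iasc (w@m#t) = (if w = [] then 0 else Suc (length w) - des w) + iasc t"
proof -
  let ?I = "\<lambda>(a::nat\<times>bool) b. \<not> fst b < fst a \<and> \<not> (snd a \<and> snd b)"
  let ?g = "\<lambda>v::nat. (v, v = 0)"
  have "iasc (w@m#t) = cnt ?I (map ?g (0#w) @ (m,True) # zip t (rf t))" by (simp add: iasc_cnt Zl_app)
  also have "\<dots> = cnt ?I (map ?g (0#w) @ [(m,True)]) + cnt ?I ((m,True) # zip t (rf t))" by (rule cnt_append)
  also have "cnt ?I ((m,True) # zip t (rf t)) = cnt ?I ((0,True) # zip t (rf t))"
  proof (rule cnt_Cons_cong)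
    fix b assume "b \<in> set (zip t (rf t))"
    then have "fst b \<in> set t" by (metis prod.collapse set_zip_leftD)
    then show "?I (m,True) b = ?I (0,True) b" using mt by auto
  qed
  also have "\<dots> = iasc t" by (simp add: iasc_cnt Zl_Cons0)
  also have "cnt ?I (map ?g (0#w) @ [(m,True)]) = cnt ?I (map ?g (0#w)) + of_bool (?I (last (map ?g (0#w))) (m,True))"
    by (rule cnt_snoc) simp
  also have "of_bool (?I (last (map ?g (0#w))) (m,True)) = (0::nat)"
    using last_w by (cases "w = []") (auto simp: last_map)
  also have "cnt ?I (map ?g (0#w)) = cnt (\<lambda>a b. \<not> (b::nat) < a) (0#w)"
    unfolding cnt_map
  proof (rule cnt_cong_adj)
    fix i assume "Suc i < length (0#w)"
    then have "(0#w) ! Suc i \<in> set w" by simp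
    then have "(0#w) ! Suc i \<noteq> 0" using mw by auto
    then show "?I (?g ((0#w)!i)) (?g ((0#w)!Suc i)) = (\<not> (0#w)!Suc i < (0#w)!i)" by simp
  qed
  also have "cnt (\<lambda>a b. \<not> (b::nat) < a) (0#w) = (if w = [] then 0 else Suc (length w) - des w)"
  proof -
    have "cnt (\<lambda>a b. (b::nat) < a) (0#w) + cnt (\<lambda>a b. \<not> (b::nat) < a) (0#w) = length w"
      using cnt_compl[of "\<lambda>a b. (b::nat) < a" "0#w"] by simp
    then show ?thesis using des_split[OF w0] by auto
  qed
  finally show ?thesis by simp
qed

lemma isol_app: "isol (w@m#t) = of_bool (w = []) + isol t"
proof -
  let ?I = "\<lambda>(a::nat\<times>bool) b. snd a \<and> snd b"
  let ?g = "\<lambda>v::nat. (v, v = 0)"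
  have "isol (w@m#t) = cnt ?I (map ?g (0#w) @ (m,True) # zip t (rf t))" by (simp add: isol_cnt Zl_app)
  also have "\<dots> = cnt ?I (map ?g (0#w) @ [(m,True)]) + cnt ?I ((m,True) # zip t (rf t))" by (rule cnt_append)
  also have "cnt ?I ((m,True) # zip t (rf t)) = cnt ?I ((0,True) # zip t (rf t))"
    by (rule cnt_Cons_cong) auto
  also have "\<dots> = isol t" by (simp add: isol_cnt Zl_Cons0)
  also have "cnt ?I (map ?g (0#w) @ [(m,True)]) = cnt ?I (map ?g (0#w)) + of_bool (?I (last (map ?g (0#w))) (m,True))"
    by (rule cnt_snoc) simp
  also have "of_bool (?I (last (map ?g (0#w))) (m,True)) = (of_bool (w = []) :: nat)"
    using last_w m0 by (cases "w = []") (auto simp: last_map)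
  also have "cnt ?I (map ?g (0#w)) = cnt (\<lambda>a b. False) (0#w)"
    unfolding cnt_map
  proof (rule cnt_cong_adj)
    fix i assume "Suc i < length (0#w)"
    then have "(0#w) ! Suc i \<in> set w" by simp
    then have "(0#w) ! Suc i \<noteq> 0" using mw by auto
    then show "?I (?g ((0#w)!i)) (?g ((0#w)!Suc i)) = False" by simp
  qed
  finally show ?thesis by (simp add: cnt_False)
qed

end



fun invl :: "nat list \<Rightarrow> nat" where
  "invl [] = 0"
| "invl (a#l) = length (filter (\<lambda>b. b < a) l) + invl l"

definition inv0 :: "nat list \<Rightarrow> nat" where
  "inv0 s = card {(i,j). i < j \<and> j < length s \<and> s!j < s!i}"

lemma inv_inv0: "Defs.inv s = inv0 s"
proof -
  have "{(i, j). 1 \<le> i \<and> i < j \<and> j \<le> length s \<and> ent s j < ent s i} =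
        (\<lambda>(i,j). (Suc i, Suc j)) ` {(i,j). i < j \<and> j < length s \<and> s!j < s!i}"
  proof (intro set_eqI iffI)
    fix p assume "p \<in> {(i, j). 1 \<le> i \<and> i < j \<and> j \<le> length s \<and> ent s j < ent s i}"
    then obtain i j where p: "p = (i,j)" "1 \<le> i" "i < j" "j \<le> length s" "ent s j < ent s i" by auto
    then show "p \<in> (\<lambda>(i,j). (Suc i, Suc j)) ` {(i,j). i < j \<and> j < length s \<and> s!j < s!i}"
      by (intro image_eqI[where x="(i-1,j-1)"]) (auto simp: ent_def)
  next
    fix p assume "p \<in> (\<lambda>(i,j). (Suc i, Suc j)) ` {(i,j). i < j \<and> j < length s \<and> s!j < s!i}"
    then show "p \<in> {(i, j). 1 \<le> i \<and> i < j \<and> j \<le> length s \<and> ent s j < ent s i}"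
      by (auto simp: ent_def)
  qed
  moreover have "inj_on (\<lambda>(i,j). (Suc i, Suc (j::nat))) X" for X by (auto simp: inj_on_def)
  ultimately show ?thesis unfolding Defs.inv_def inv0_def by (simp add: card_image)
qed

lemma inv0_Cons: "inv0 (a#l) = length (filter (\<lambda>b. b < a) l) + inv0 l"
proof -
  have "{(i,j). i < j \<and> j < length (a#l) \<and> (a#l)!j < (a#l)!i} =
        (\<lambda>j. (0, Suc j)) ` {j. j < length l \<and> l!j < a} \<union>
        (\<lambda>(i,j). (Suc i, Suc j)) ` {(i,j). i < j \<and> j < length l \<and> l!j < l!i}"
  proof (intro set_eqI iffI)
    fix p assume "p \<in> {(i,j). i < j \<and> j < length (a#l) \<and> (a#l)!j < (a#l)!i}"
    then obtain i j where p: "p = (i,j)" "i < j" "j < length (a#l)" "(a#l)!j < (a#l)!i" by auto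
    show "p \<in> (\<lambda>j. (0, Suc j)) ` {j. j < length l \<and> l!j < a} \<union>
        (\<lambda>(i,j). (Suc i, Suc j)) ` {(i,j). i < j \<and> j < length l \<and> l!j < l!i}"
    proof (cases i)
      case 0 then show ?thesis using p by (intro UnI1 image_eqI[where x="j-1"]) auto
    next
      case (Suc i') then show ?thesis using p by (intro UnI2 image_eqI[where x="(i',j-1)"]) auto
    qed
  qed auto
  moreover have "(\<lambda>j. (0::nat, Suc j)) ` {j. j < length l \<and> l!j < a} \<inter>
        (\<lambda>(i,j). (Suc i, Suc j)) ` {(i,j). i < j \<and> j < length l \<and> l!j < l!i} = {}" by auto
  moreover have "inj_on (\<lambda>(i,j). (Suc i, Suc (j::nat))) X" for X by (auto simp: inj_on_def)
  moreover have "inj_on (\<lambda>j. (0::nat, Suc j)) X" for X by (auto simp: inj_on_def)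
  moreover have "finite {(i,j). i < j \<and> j < length l \<and> l!j < l!i}"
    by (rule finite_subset[of _ "{..<length l} \<times> {..<length l}"]) auto
  ultimately show ?thesis unfolding inv0_def
    by (simp add: card_Un_disjoint card_image length_filter_conv_card)
qed

lemma inv_invl: "Defs.inv s = invl s"
proof -
  have "inv0 s = invl s" by (induction s) (simp_all add: inv0_Cons, simp add: inv0_def)
  then show ?thesis by (simp add: inv_inv0)
qed

lemma invl_append: "invl (u @ v) = invl u + invl v + (\<Sum>a\<leftarrow>u. length (filter (\<lambda>b. b < a) v))"
  by (induction u) auto

definition cross :: "nat set \<Rightarrow> nat set \<Rightarrow> nat" where
  "cross S T = (\<Sum>a\<in>S. card {b\<in>T. b < a})"

lemma invl_append_distinct:
  assumes "distinct (u @ v)"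
  shows "invl (u @ v) = invl u + invl v + cross (set u) (set v)"
proof -
  have "(\<Sum>a\<leftarrow>u. length (filter (\<lambda>b. b < a) v)) = (\<Sum>a\<in>set u. length (filter (\<lambda>b. b < a) v))"
    using assms by (simp add: sum_list_distinct_conv_sum_set)
  also have "\<dots> = cross (set u) (set v)" unfolding cross_def
  proof (rule sum.cong)
    fix a show "length (filter (\<lambda>b. b < a) v) = card {b \<in> set v. b < a}"
      using assms by (metis distinct_append distinct_card distinct_filter set_filter)
  qed simp
  finally show ?thesis by (simp add: invl_append)
qed

lemma invl_sorted: "sorted l \<Longrightarrow> invl l = 0"
  by (induction l) (auto simp: filter_empty_conv)


fun qbin :: "complex \<Rightarrow> nat \<Rightarrow> nat \<Rightarrow> complex" where
  "qbin q n 0 = 1"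
| "qbin q 0 (Suc k) = 0"
| "qbin q (Suc n) (Suc k) = qbin q n (Suc k) + q ^ (n - k) * qbin q n k"

lemma qbin_gt: "k > n \<Longrightarrow> qbin q n k = 0"
proof (induction n arbitrary: k)
  case 0 then show ?case by (cases k) auto
next
  case (Suc n) then show ?case by (cases k) auto
qed

lemma qbin_nn: "qbin q n n = 1"
  by (induction n) (auto simp: qbin_gt)

lemma qpoch_Suc: "qpoch q (Suc n) = qpoch q n * (1 - q ^ Suc n)"
  by (simp add: qpoch_def)

lemma qbin_qpoch: "k \<le> n \<Longrightarrow> qbin q n k * qpoch q k * qpoch q (n - k) = qpoch q n"
proof (induction n arbitrary: k)
  case 0 then show ?case by (simp add: qpoch_def)
next
  case (Suc n)
  show ?case
  proof (cases k)
    case 0 then show ?thesis by (simp add: qpoch_def)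
  next
    case (Suc k')
    show ?thesis
    proof (cases "k' = n")
      case True then show ?thesis using Suc by (simp add: qbin_gt qbin_nn qpoch_def)
    next
      case False
      then have k': "k' < n" using Suc \<open>k \<le> Suc n\<close> by simp
      have p1: "qpoch q (Suc k') = qpoch q k' * (1 - q ^ Suc k')" by (simp add: qpoch_def)
      have p2: "qpoch q (n - k') = qpoch q (n - Suc k') * (1 - q ^ (n - k'))"
        using k' qpoch_Suc[of q "n - Suc k'"] by (simp add: Suc_diff_Suc)
      have p3: "qpoch q (Suc n) = qpoch q n * (1 - q ^ Suc n)" by (simp add: qpoch_def)
      have i1: "qbin q n (Suc k') * qpoch q (Suc k') * qpoch q (n - Suc k') = qpoch q n"
        using Suc.IH[of "Suc k'"] k' by simp
      have i2: "qbin q n k' * qpoch q k' * qpoch q (n - k') = qpoch q n"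
        using Suc.IH[of k'] k' by simp
      have "n - k' + Suc k' = Suc n" using k' by simp
      then have e: "q ^ (n - k') * q ^ Suc k' = q ^ Suc n" by (metis power_add)
      have "qbin q (Suc n) k * qpoch q k * qpoch q (Suc n - k) =
         qbin q n (Suc k') * qpoch q (Suc k') * qpoch q (n - Suc k') * (1 - q ^ (n - k'))
         + q ^ (n - k') * (qbin q n k' * qpoch q k' * qpoch q (n - k')) * (1 - q ^ Suc k')"
      proof -
        have alg: "(Q1 + b*Q0)*P1*P2 = Q1*P1*P3*(1-b) + b*(Q0*P0*P2)*(1-a)"
          if "P1 = P0 * (1-a)" "P2 = P3*(1-b)" for Q1 Q0 P1 P2 P3 P0 a b :: complex
          unfolding that by (simp add: algebra_simps)
        have "qbin q (Suc n) k * qpoch q k * qpoch q (Suc n - k) =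
          (qbin q n (Suc k') + q ^ (n - k') * qbin q n k') * qpoch q (Suc k') * qpoch q (n - k')"
          using Suc by simp
        also have "\<dots> = qbin q n (Suc k') * qpoch q (Suc k') * qpoch q (n - Suc k') * (1 - q ^ (n - k'))
         + q ^ (n - k') * (qbin q n k' * qpoch q k' * qpoch q (n - k')) * (1 - q ^ Suc k')"
          by (rule alg[OF p1 p2])
        finally show ?thesis .
      qed
      also have "\<dots> = qpoch q n * (1 - q ^ (n - k') + q ^ (n - k') - q ^ (n - k') * q ^ Suc k')"
        unfolding i1 i2 by (simp add: algebra_simps)
      also have "\<dots> = qpoch q (Suc n)" unfolding e p3 by simp
      finally show ?thesis .
    qed
  qed
qed

lemma cross_insert_left: "finite S \<Longrightarrow> M \<notin> S \<Longrightarrow> cross (insert M S) T = card {b\<in>T. b < M} + cross S T"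
  unfolding cross_def by simp

lemma cross_insert_right: "\<forall>a\<in>S. a < M \<Longrightarrow> cross S (insert M T) = cross S T"
  unfolding cross_def by (intro sum.cong) (auto intro!: arg_cong[where f=card])

lemma cross_empty_left[simp]: "cross {} T = 0" unfolding cross_def by simp

lemma qbin_subsets:
  assumes "finite B"
  shows "(\<Sum>S\<in>{S. S \<subseteq> B \<and> card S = k}. q ^ cross S (B - S)) = qbin q (card B) k"
  using assms
proof (induction B arbitrary: k rule: finite_linorder_max_induct)
  case empty
  have "{S. S \<subseteq> {} \<and> card S = k} = (if k = 0 then {{}} else {})" by auto
  show ?case unfolding \<open>{S. S \<subseteq> {} \<and> card S = k} = (if k = 0 then {{}} else {})\<close> by (cases k) simp_all
next
  case (insert M B)
  have MB: "M \<notin> B" using insert by auto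
  show ?case
  proof (cases k)
    case 0
    then have "{S. S \<subseteq> insert M B \<and> card S = k} = {{}}" using insert.hyps(1)
      by (auto simp: card_eq_0_iff intro: finite_subset)
    then show ?thesis using 0 by simp
  next
    case (Suc k')
    let ?A = "{S. S \<subseteq> insert M B \<and> card S = k}"
    let ?Co = "{S. S \<subseteq> B \<and> card S = Suc k'}"
    let ?Cz = "{S. S \<subseteq> B \<and> card S = k'}"
    have split: "?A = ?Co \<union> insert M ` ?Cz"
    proof (intro set_eqI iffI)
      fix S assume S: "S \<in> ?A"
      show "S \<in> ?Co \<union> insert M ` ?Cz"
      proof (cases "M \<in> S")
        case True
        then have "S = insert M (S - {M})" by auto
        moreover have "card (S - {M}) = k'"
        proof -
          have "S \<subseteq> insert M B" "card S = k" using S by simp_all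
          then have "S \<subseteq> insert M B" "card S = Suc k'" using \<open>k = Suc k'\<close> by simp_all
          moreover have "finite S" using calculation(1) insert.hyps(1) by (meson finite_insert finite_subset)
          ultimately show ?thesis using True by (simp add: card_Diff_singleton)
        qed
        ultimately show ?thesis using S by (intro UnI2 image_eqI[where x="S - {M}"]) auto
      next
        case False then show ?thesis using S Suc by auto
      qed
    next
      fix S assume "S \<in> ?Co \<union> insert M ` ?Cz"
      then show "S \<in> ?A" using Suc MB insert.hyps(1)
        by (auto simp: card_insert_if finite_subset subset_iff)
    qed
    have disj: "?Co \<inter> insert M ` ?Cz = {}" using MB by auto
    have fin: "finite ?Co" "finite (insert M ` ?Cz)" using insert.hyps(1) by auto
    have inj: "inj_on (insert M) ?Cz" unfolding inj_on_def
    proof (intro ballI impI)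
      fix X Y assume XY: "X \<in> ?Cz" "Y \<in> ?Cz" "insert M X = insert M Y"
      then have "M \<notin> X" "M \<notin> Y" using MB by auto
      then show "X = Y" using XY(3) by (metis Diff_insert_absorb)
    qed
    have s1: "(\<Sum>S\<in>?Co. q ^ cross S (insert M B - S)) = qbin q (card B) (Suc k')"
    proof -
      have "(\<Sum>S\<in>?Co. q ^ cross S (insert M B - S)) = (\<Sum>S\<in>?Co. q ^ cross S (B - S))"
      proof (rule sum.cong)
        fix S assume "S \<in> ?Co"
        then have "insert M B - S = insert M (B - S)" "\<forall>a\<in>S. a < M" using MB insert.hyps(2) by auto
        then show "q ^ cross S (insert M B - S) = q ^ cross S (B - S)" by (simp add: cross_insert_right)
      qed simp
      then show ?thesis using insert.IH by simp
    qed
    have s2: "(\<Sum>S\<in>insert M ` ?Cz. q ^ cross S (insert M B - S)) = q ^ (card B - k') * qbin q (card B) k'"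
    proof -
      have "(\<Sum>S\<in>insert M ` ?Cz. q ^ cross S (insert M B - S)) = (\<Sum>S\<in>?Cz. q ^ cross (insert M S) (insert M B - insert M S))"
        by (rule sum.reindex[OF inj, unfolded comp_def])
      also have "\<dots> = (\<Sum>S\<in>?Cz. q ^ (card B - k') * q ^ cross S (B - S))"
      proof (rule sum.cong)
        fix S assume S: "S \<in> ?Cz"
        then have fS: "finite S" "M \<notin> S" using insert.hyps(1) MB by (auto intro: finite_subset)
        have "insert M B - insert M S = B - S" using MB by auto
        moreover have "{b \<in> B - S. b < M} = B - S" using insert.hyps(2) by auto
        moreover have "card (B - S) = card B - k'"
        proof -
          have "S \<subseteq> B" "card S = k'" using S by simp_all
          then show ?thesis using fS(1) by (simp add: card_Diff_subset)
        qed
        ultimately show "q ^ cross (insert M S) (insert M B - insert M S) = q ^ (card B - k') * q ^ cross S (B - S)"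
          using fS by (simp add: cross_insert_left power_add)
      qed simp
      also have "\<dots> = q ^ (card B - k') * qbin q (card B) k'" by (simp add: sum_distrib_left[symmetric] insert.IH)
      finally show ?thesis .
    qed
    have "card (insert M B) = Suc (card B)" using MB insert.hyps(1) by simp
    moreover have "(\<Sum>S\<in>?A. q ^ cross S (insert M B - S)) = (\<Sum>S\<in>?Co. q ^ cross S (insert M B - S)) + (\<Sum>S\<in>insert M ` ?Cz. q ^ cross S (insert M B - S))"
      unfolding split by (rule sum.union_disjoint[OF fin disj])
    ultimately show ?thesis using s1 s2 Suc by simp
  qed
qed



lemma perm_split1:
  assumes "finite A" "m \<in> A"
  shows "(\<Sum>\<sigma>\<in>permutations_of_set A. h \<sigma>) =
    (\<Sum>S\<in>Pow (A - {m}). \<Sum>w\<in>permutations_of_set S. \<Sum>t\<in>permutations_of_set (A - {m} - S). h (w @ m # t))"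
proof -
  let ?B = "A - {m}"
  let ?Sig = "SIGMA S:Pow ?B. permutations_of_set S \<times> permutations_of_set (?B - S)"
  let ?phi = "\<lambda>(S, w, t). w @ m # t"
  have finB: "finite ?B" using assms by simp
  have fin: "\<forall>S\<in>Pow ?B. finite (permutations_of_set S \<times> permutations_of_set (?B - S))"
    using finB by (auto intro!: finite_cartesian_product finite_permutations_of_set)
  have "(\<Sum>S\<in>Pow ?B. \<Sum>w\<in>permutations_of_set S. \<Sum>t\<in>permutations_of_set (?B - S). h (w @ m # t))
      = (\<Sum>S\<in>Pow ?B. \<Sum>p\<in>permutations_of_set S \<times> permutations_of_set (?B - S). h (fst p @ m # snd p))"
    by (simp add: sum.cartesian_product case_prod_beta)
  also have "\<dots> = (\<Sum>x\<in>?Sig. h (?phi x))"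
    using finB fin by (subst sum.Sigma) (auto simp: case_prod_beta)
  also have "\<dots> = (\<Sum>\<sigma>\<in>permutations_of_set A. h \<sigma>)"
  proof (rule sum.reindex_bij_betw, rule bij_betw_imageI)
    show "inj_on ?phi ?Sig"
    proof (rule inj_onI)
      fix p1 p2 assume p: "p1 \<in> ?Sig" "p2 \<in> ?Sig" "?phi p1 = ?phi p2"
      obtain S1 w1 t1 where 1: "p1 = (S1, w1, t1)" by (cases p1) auto
      obtain S2 w2 t2 where 2: "p2 = (S2, w2, t2)" by (cases p2) auto
      have s1: "set w1 = S1" "S1 \<subseteq> ?B" using p(1) 1 by (auto dest: permutations_of_setD)
      have s2: "set w2 = S2" "S2 \<subseteq> ?B" using p(2) 2 by (auto dest: permutations_of_setD)
      have "set t1 = ?B - S1" using p(1) 1 by (auto dest: permutations_of_setD)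
      then have "m \<notin> set w1" "m \<notin> set t1" using s1 by auto
      then have "w1 = w2 \<and> t1 = t2" using p(3) 1 2 append_Cons_eq_iff[of m w1 t1 w2 t2] by simp
      then show "p1 = p2" using 1 2 s1 s2 by auto
    qed
  next
    show "?phi ` ?Sig = permutations_of_set A"
    proof (intro set_eqI iffI)
      fix \<sigma> assume "\<sigma> \<in> ?phi ` ?Sig"
      then obtain S w t where S: "S \<subseteq> ?B" "w \<in> permutations_of_set S" "t \<in> permutations_of_set (?B - S)"
        and \<sigma>: "\<sigma> = w @ m # t" by auto
      have "set w = S" "distinct w" "set t = ?B - S" "distinct t" using S(2,3) by (auto dest: permutations_of_setD)
      then show "\<sigma> \<in> permutations_of_set A" using \<sigma> S(1) assms(2)
        by (intro permutations_of_setI) auto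
    next
      fix \<sigma> assume "\<sigma> \<in> permutations_of_set A"
      then have \<sigma>: "set \<sigma> = A" "distinct \<sigma>" by (auto dest: permutations_of_setD)
      then obtain w t where wt: "\<sigma> = w @ m # t" using assms(2) by (metis split_list)
      have "m \<notin> set w" "m \<notin> set t" "set w \<inter> set t = {}" "distinct w" "distinct t" using \<sigma>(2) wt by auto
      then have "set w \<subseteq> ?B" "set t = ?B - set w" using \<sigma>(1) wt by auto
      then show "\<sigma> \<in> ?phi ` ?Sig"
        using wt \<open>distinct w\<close> \<open>distinct t\<close>
        by (intro image_eqI[where x="(set w, w, t)"]) (auto intro: permutations_of_setI)
    qed
  qed
  finally show ?thesis by simp
qed


definition Tw :: "complex \<Rightarrow> complex \<Rightarrow> complex \<Rightarrow> complex \<Rightarrow> complex \<Rightarrow> nat list \<Rightarrow> complex" where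
  "Tw q x y z b s = q ^ Defs.inv s * x ^ iasc s * z ^ isol s * y ^ (des s - 1) * b ^ RLmin s"

definition Wt :: "complex \<Rightarrow> complex \<Rightarrow> complex \<Rightarrow> complex \<Rightarrow> nat list \<Rightarrow> complex" where
  "Wt q x y z s = (if s = [] then z else q ^ invl s * x ^ (Suc (length s) - des s) * y ^ des s)"

lemma stats_Nil: "Defs.inv [] = 0" "iasc [] = 0" "isol [] = 0" "des [] = 0" "RLmin [] = 0"
proof -
  have "{i. is_RLmin [] i} = {}" by (auto simp: is_RLmin_def)
  then show "Defs.inv [] = 0" "iasc [] = 0" "isol [] = 0" "des [] = 0" "RLmin [] = 0"
    by (simp_all add: inv_invl iasc_cnt isol_cnt Zl_def rf_def des_cnt RLmin_def)
qed

lemma Tw_Nil: "Tw q x y z b [] = 1"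
  by (simp add: Tw_def stats_Nil)

lemma des_pos: "0 \<notin> set t \<Longrightarrow> t \<noteq> [] \<Longrightarrow> des t \<ge> 1"
  using des_split[of t] by simp

lemma cross_insert_small:
  assumes "finite S" "\<forall>a\<in>S. M < a" "M \<notin> T"
  shows "cross S (insert M T) = card S + cross S T"
proof -
  have "cross S (insert M T) = (\<Sum>a\<in>S. 1 + card {b\<in>T. b < a})"
    unfolding cross_def
  proof (rule sum.cong)
    fix a assume "a \<in> S"
    then have "{b \<in> insert M T. b < a} = insert M {b\<in>T. b < a}" using assms(2) by auto
    moreover have "finite {b\<in>T. b < a}" by simp
    ultimately show "card {b \<in> insert M T. b < a} = 1 + card {b\<in>T. b < a}" using assms(3) by simp
  qed simp
  also have "\<dots> = (\<Sum>a\<in>S. 1) + (\<Sum>a\<in>S. card {b\<in>T. b < a})" by (rule sum.distrib)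
  finally show ?thesis unfolding cross_def by simp
qed

context split3 begin

lemma invl_app:
  assumes "distinct (w @ m # t)"
  shows "invl (w @ m # t) = invl w + invl t + length w + cross (set w) (set t)"
proof -
  have "invl (w @ m # t) = invl w + invl (m#t) + cross (set w) (set (m#t))"
    using assms by (rule invl_append_distinct)
  moreover have "invl (m#t) = invl t" using mt by (auto simp: filter_empty_conv)
  moreover have "cross (set w) (set (m#t)) = card (set w) + cross (set w) (set t)"
    using assms mw by (simp add: cross_insert_small)
  moreover have "card (set w) = length w" using assms by (simp add: distinct_card)
  ultimately show ?thesis by simp
qed

lemma Tw_app:
  assumes "distinct (w @ m # t)"
  shows "Tw q x y z b (w @ m # t) = q ^ (length w + cross (set w) (set t)) * b * Wt q x y z w * Tw q x y z b t"
proof -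
  have t0: "0 \<notin> set t" using mt by auto
  have d: "des (w@m#t) - 1 = des w + (des t - 1)"
    using des_pos[OF t0] by (simp add: des_app stats_Nil)
  have i: "Defs.inv (w@m#t) = invl w + Defs.inv t + length w + cross (set w) (set t)"
    using invl_app[OF assms] by (simp add: inv_invl)
  have e: "Tw q x y z b (w @ m # t) = q ^ (invl w + Defs.inv t + length w + cross (set w) (set t)) *
     x ^ ((if w = [] then 0 else Suc (length w) - des w) + iasc t) * z ^ (of_bool (w = []) + isol t) *
     y ^ (des w + (des t - 1)) * b ^ (Suc (RLmin t))"
    unfolding Tw_def by (simp only: d i iasc_app isol_app RLmin_app)
  show ?thesis
  proof (cases "w = []")
    case True
    then show ?thesis unfolding e by (simp add: Wt_def Tw_def stats_Nil power_add algebra_simps)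
  next
    case False
    then show ?thesis unfolding e by (simp add: Wt_def Tw_def power_add algebra_simps)
  qed
qed

end


fun Fr :: "(nat \<Rightarrow> complex) \<Rightarrow> complex \<Rightarrow> complex \<Rightarrow> nat \<Rightarrow> complex" where
  "Fr W q b 0 = 1"
| "Fr W q b (Suc n) = b * (\<Sum>k\<le>n. qbin q n k * q ^ k * W k * Fr W q b (n - k))"

lemma part1:
  assumes HW: "\<And>S. finite S \<Longrightarrow> 0 \<notin> S \<Longrightarrow> (\<Sum>w\<in>permutations_of_set S. Wt q x y z w) = W (card S)"
  shows "finite A \<Longrightarrow> 0 \<notin> A \<Longrightarrow> (\<Sum>\<sigma>\<in>permutations_of_set A. Tw q x y z b \<sigma>) = Fr W q b (card A)"
proof (induction "card A" arbitrary: A rule: less_induct)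
  case less
  show ?case
  proof (cases "A = {}")
    case True then show ?thesis by (simp add: Tw_Nil)
  next
    case False
    define m where "m = Min A"
    define B where "B = A - {m}"
    have mA: "m \<in> A" using False less.prems m_def by simp
    have mB: "\<forall>a\<in>B. m < a" using less.prems unfolding B_def m_def
      by (metis DiffE Min.coboundedI insertI1 nat_less_le)
    have m0: "0 < m" using mA less.prems by (metis gr0I)
    have finB: "finite B" using less.prems B_def by simp
    have "card A > 0" using mA less.prems(1) card_gt_0_iff by blast
    then have cA: "card A = Suc (card B)" using mA less.prems unfolding B_def by (simp add: card_Diff_singleton)
    have "(\<Sum>\<sigma>\<in>permutations_of_set A. Tw q x y z b \<sigma>) =
      (\<Sum>S\<in>Pow B. \<Sum>w\<in>permutations_of_set S. \<Sum>t\<in>permutations_of_set (B - S). Tw q x y z b (w @ m # t))"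
      unfolding B_def by (rule perm_split1[OF less.prems(1) mA])
    also have "\<dots> = (\<Sum>S\<in>Pow B. \<Sum>w\<in>permutations_of_set S. \<Sum>t\<in>permutations_of_set (B - S).
        q ^ (card S + cross S (B - S)) * b * Wt q x y z w * Tw q x y z b t)"
    proof (intro sum.cong refl)
      fix S w t assume S: "S \<in> Pow B" and w: "w \<in> permutations_of_set S" and t: "t \<in> permutations_of_set (B - S)"
      have sw: "set w = S" "distinct w" using w by (auto dest: permutations_of_setD)
      have st: "set t = B - S" "distinct t" using t by (auto dest: permutations_of_setD)
      have "m \<notin> B" unfolding B_def by simp
      then have dist: "distinct (w @ m # t)" using sw st S by auto
      have sp: "split3 w t m" using mB sw st S m0 by unfold_locales auto
      have "length w = card S" using sw distinct_card by metis
      then show "Tw q x y z b (w @ m # t) = q ^ (card S + cross S (B - S)) * b * Wt q x y z w * Tw q x y z b t"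
        using split3.Tw_app[OF sp dist] sw st by simp
    qed
    also have "\<dots> = (\<Sum>S\<in>Pow B. q ^ (card S + cross S (B - S)) * b * W (card S) * Fr W q b (card B - card S))"
    proof (rule sum.cong[OF refl])
      fix S assume S: "S \<in> Pow B"
      have fS: "finite S" "0 \<notin> S" using S finB less.prems unfolding B_def by (auto intro: finite_subset)
      have fBS: "finite (B - S)" "0 \<notin> B - S" using finB less.prems unfolding B_def by auto
      have cBS: "card (B - S) < card A" using cA finB S by (simp add: card_Diff_subset finite_subset le_imp_less_Suc)
      have "card (B - S) = card B - card S" using S fS finB by (simp add: card_Diff_subset)
      then have IH: "(\<Sum>t\<in>permutations_of_set (B - S). Tw q x y z b t) = Fr W q b (card B - card S)"
        using less.hyps[OF cBS fBS] by simp
      have "(\<Sum>w\<in>permutations_of_set S. \<Sum>t\<in>permutations_of_set (B - S).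
        q ^ (card S + cross S (B - S)) * b * Wt q x y z w * Tw q x y z b t) =
        q ^ (card S + cross S (B - S)) * b * (\<Sum>w\<in>permutations_of_set S. Wt q x y z w) * (\<Sum>t\<in>permutations_of_set (B - S). Tw q x y z b t)"
      proof -
        let ?c = "q ^ (card S + cross S (B - S)) * b"
        have "?c * (\<Sum>w\<in>permutations_of_set S. Wt q x y z w) * (\<Sum>t\<in>permutations_of_set (B - S). Tw q x y z b t)
          = ?c * (\<Sum>w\<in>permutations_of_set S. \<Sum>t\<in>permutations_of_set (B - S). Wt q x y z w * Tw q x y z b t)"
          by (simp add: sum_product mult.assoc)
        also have "\<dots> = (\<Sum>w\<in>permutations_of_set S. \<Sum>t\<in>permutations_of_set (B - S). ?c * (Wt q x y z w * Tw q x y z b t))"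
          by (simp add: sum_distrib_left)
        finally show ?thesis by (simp add: mult.assoc)
      qed
      then show "(\<Sum>w\<in>permutations_of_set S. \<Sum>t\<in>permutations_of_set (B - S).
        q ^ (card S + cross S (B - S)) * b * Wt q x y z w * Tw q x y z b t) =
        q ^ (card S + cross S (B - S)) * b * W (card S) * Fr W q b (card B - card S)"
        using HW[OF fS] IH by simp
    qed
    also have "\<dots> = (\<Sum>k\<in>{..card B}. \<Sum>S\<in>{S. S \<in> Pow B \<and> card S = k}.
        q ^ (card S + cross S (B - S)) * b * W (card S) * Fr W q b (card B - card S))"
      using finB by (intro sum.group[symmetric]) (auto simp: card_mono)
    also have "\<dots> = (\<Sum>k\<le>card B. qbin q (card B) k * q ^ k * W k * Fr W q b (card B - k)) * b"
      unfolding sum_distrib_right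
    proof (rule sum.cong[OF refl])
      fix k
      have "(\<Sum>S\<in>{S. S \<in> Pow B \<and> card S = k}. q ^ (card S + cross S (B - S)) * b * W (card S) * Fr W q b (card B - card S))
        = (\<Sum>S\<in>{S. S \<subseteq> B \<and> card S = k}. q ^ cross S (B - S)) * (q ^ k * b * W k * Fr W q b (card B - k))"
        unfolding sum_distrib_right by (intro sum.cong) (auto simp: power_add algebra_simps)
      then show "(\<Sum>S\<in>{S. S \<in> Pow B \<and> card S = k}. q ^ (card S + cross S (B - S)) * b * W (card S) * Fr W q b (card B - card S))
        = qbin q (card B) k * q ^ k * W k * Fr W q b (card B - k) * b"
        using qbin_subsets[OF finB] by (simp add: algebra_simps)
    qed
    also have "\<dots> = Fr W q b (card A)" using cA by (simp add: mult.commute)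
    finally show ?thesis .
  qed
qed



definition Pint :: "complex \<Rightarrow> complex \<Rightarrow> nat list \<Rightarrow> complex" where
  "Pint x y w = x ^ cnt (\<lambda>a b. \<not> b < a) w * y ^ cnt (\<lambda>a b. b < a) w"

lemma Pint_snoc: "u \<noteq> [] \<Longrightarrow> Pint x y (u @ [a]) = Pint x y u * (if a < last u then y else x)"
  unfolding Pint_def by (simp add: cnt_snoc)

lemma Pint_single[simp]: "Pint x y [a] = 1"
  unfolding Pint_def by simp

lemma sorted_le_last: "sorted l \<Longrightarrow> l \<noteq> [] \<Longrightarrow> v \<in> set l \<Longrightarrow> v \<le> last l"
proof (induction l)
  case (Cons a l)
  show ?case
  proof (cases "l = []")
    case True then show ?thesis using Cons by simp
  next
    case False
    then have "last l \<in> set l" by simp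
    then show ?thesis using Cons False by auto
  qed
qed simp

lemma pw:
  fixes x y :: complex
  shows "w \<noteq> [] \<Longrightarrow> (x - y) * Pint x y w = of_bool (sorted w) * (x - y) ^ length w +
     y * (\<Sum>j\<in>{1..<length w}. of_bool (sorted (drop (length w - j) w)) * (x - y) ^ j * Pint x y (take (length w - j) w))"
proof (induction w rule: rev_induct)
  case Nil then show ?case by simp
next
  case (snoc a u)
  let ?c = "x - y"
  show ?case
  proof (cases "u = []")
    case True then show ?thesis by simp
  next
    case False
    let ?n = "length u"
    let ?f = "\<lambda>j. of_bool (sorted (drop (Suc ?n - j) (u @ [a]))) * ?c ^ j * Pint x y (take (Suc ?n - j) (u @ [a]))"
    let ?g = "\<lambda>j. of_bool (sorted (drop (?n - j) u)) * ?c ^ j * Pint x y (take (?n - j) u)"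
    have n1: "?n \<ge> 1" using False by (cases u) auto
    have "{1..<Suc ?n} = insert 1 {Suc 1..<Suc ?n}" using n1 by auto
    then have "(\<Sum>j\<in>{1..<Suc ?n}. ?f j) = ?f 1 + (\<Sum>j\<in>{1+1..<?n+1}. ?f j)" by simp
    also have "(\<Sum>j\<in>{1+1..<?n+1}. ?f j) = (\<Sum>j\<in>{1..<?n}. ?f (j + 1))" by (rule sum.shift_bounds_nat_ivl)
    also have "?f 1 = ?c * Pint x y u" by simp
    finally have S: "(\<Sum>j\<in>{1..<Suc ?n}. ?f j) = ?c * Pint x y u + (\<Sum>j\<in>{1..<?n}. ?f (j + 1))" .
    have fj: "?f (j + 1) = of_bool (sorted (drop (?n - j) u @ [a])) * ?c ^ (j+1) * Pint x y (take (?n - j) u)"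
      if "j \<in> {1..<?n}" for j
    proof -
      have "Suc ?n - (j + 1) = ?n - j" by simp
      moreover have "drop (?n - j) (u @ [a]) = drop (?n - j) u @ [a]" using that by simp
      moreover have "take (?n - j) (u @ [a]) = take (?n - j) u" using that by simp
      ultimately show ?thesis by simp
    qed
    show ?thesis
    proof (cases "a < last u")
      case True
      have z0: "?f (j + 1) = 0" if "j \<in> {1..<?n}" for j
      proof -
        have ne: "drop (?n - j) u \<noteq> []" using that by auto
        have "?n - j < ?n" using that by auto
        then have "last (drop (?n - j) u) = last u" by (rule last_drop)
        then have "last u \<in> set (drop (?n - j) u)" using ne by (metis last_in_set)
        then have "\<not> sorted (drop (?n - j) u @ [a])" using True by (force simp: sorted_append)
        then show ?thesis using fj[OF that] by simp
      qed
      have Z: "(\<Sum>j\<in>{1..<?n}. ?f (j + 1)) = 0" by (rule sum.neutral) (use z0 in blast)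
      moreover have "\<not> sorted (u @ [a])"
      proof
        assume "sorted (u @ [a])"
        then have "last u \<le> a" using last_in_set[OF False] by (simp add: sorted_append)
        then show False using True by simp
      qed
      ultimately show ?thesis unfolding length_append_singleton S Z using False True
        by (simp add: Pint_snoc)
    next
      case nt: False
      have "?f (j + 1) = ?c * ?g j" if "j \<in> {1..<?n}" for j
      proof -
        have "sorted (drop (?n - j) u @ [a]) = sorted (drop (?n - j) u)"
        proof
          assume "sorted (drop (?n - j) u)"
          moreover have "drop (?n - j) u \<noteq> []" using that by auto
          moreover have "?n - j < ?n" using that by auto
          then have "last (drop (?n - j) u) = last u" by (rule last_drop)
          ultimately have "\<forall>v\<in>set (drop (?n - j) u). v \<le> last u"
            using sorted_le_last by metis
          then show "sorted (drop (?n - j) u @ [a])" using nt \<open>sorted (drop (?n - j) u)\<close>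
            by (auto simp: sorted_append)
        qed (simp add: sorted_append)
        then show ?thesis using fj[OF that] by (simp add: algebra_simps)
      qed
      then have "(\<Sum>j\<in>{1..<?n}. ?f (j + 1)) = (\<Sum>j\<in>{1..<?n}. ?c * ?g j)"
        by (rule sum.cong[OF refl])
      also have "\<dots> = ?c * (\<Sum>j\<in>{1..<?n}. ?g j)" by (rule sum_distrib_left[symmetric])
      finally have "(\<Sum>j\<in>{1..<?n}. ?f (j + 1)) = ?c * (\<Sum>j\<in>{1..<?n}. ?g j)" .
      moreover have "sorted (u @ [a]) = sorted u"
      proof
        assume "sorted u"
        then have "\<forall>v\<in>set u. v \<le> last u" using sorted_le_last False by blast
        then show "sorted (u @ [a])" using nt \<open>sorted u\<close> by (auto simp: sorted_append)
      qed (simp add: sorted_append)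
      moreover have "Pint x y (u @ [a]) = Pint x y u * x" using nt False by (simp add: Pint_snoc)
      ultimately show ?thesis unfolding length_append_singleton S using snoc.IH[OF False]
        by (simp add: algebra_simps)
    qed
  qed
qed


lemma perm_split2:
  fixes h :: "nat list \<Rightarrow> complex"
  assumes "finite S" "k \<le> card S"
  shows "(\<Sum>w\<in>permutations_of_set S. of_bool (sorted (drop k w)) * h w) =
    (\<Sum>S'\<in>{S'. S' \<subseteq> S \<and> card S' = k}. \<Sum>\<alpha>\<in>permutations_of_set S'. h (\<alpha> @ sorted_list_of_set (S - S')))"
proof -
  let ?Sig = "SIGMA S':{S'. S' \<subseteq> S \<and> card S' = k}. permutations_of_set S'"
  let ?phi = "\<lambda>(S', \<alpha>). \<alpha> @ sorted_list_of_set (S - S')"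
  let ?T = "{w \<in> permutations_of_set S. sorted (drop k w)}"
  have finK: "finite {S'. S' \<subseteq> S \<and> card S' = k}" using assms(1) by simp
  have "(\<Sum>w\<in>permutations_of_set S. of_bool (sorted (drop k w)) * h w) = (\<Sum>w\<in>?T. h w)"
  proof -
    have "(\<Sum>w\<in>?T. h w) = (\<Sum>w\<in>permutations_of_set S. if sorted (drop k w) then h w else 0)"
      by (rule sum.inter_filter) simp
    moreover have "(\<Sum>w\<in>permutations_of_set S. of_bool (sorted (drop k w)) * h w) =
       (\<Sum>w\<in>permutations_of_set S. if sorted (drop k w) then h w else 0)"
      by (intro sum.cong) auto
    ultimately show ?thesis by simp
  qed
  also have "\<dots> = (\<Sum>p\<in>?Sig. h (?phi p))"
  proof (rule sum.reindex_bij_betw[symmetric], rule bij_betw_imageI)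
    show "inj_on ?phi ?Sig"
    proof (rule inj_onI)
      fix p1 p2 assume p: "p1 \<in> ?Sig" "p2 \<in> ?Sig" "?phi p1 = ?phi p2"
      obtain S1 a1 where 1: "p1 = (S1, a1)" by (cases p1) auto
      obtain S2 a2 where 2: "p2 = (S2, a2)" by (cases p2) auto
      have s1: "set a1 = S1" "distinct a1" "card S1 = k" using p(1) 1 by (auto dest: permutations_of_setD)
      have s2: "set a2 = S2" "distinct a2" "card S2 = k" using p(2) 2 by (auto dest: permutations_of_setD)
      have "length a1 = k" "length a2 = k" using s1 s2 by (metis distinct_card)+
      then have "a1 = a2" using p(3) 1 2 by (auto simp: append_eq_append_conv)
      then show "p1 = p2" using 1 2 s1 s2 by auto
    qed
  next
    show "?phi ` ?Sig = ?T"
    proof (intro set_eqI iffI)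
      fix w assume "w \<in> ?phi ` ?Sig"
      then obtain S' \<alpha> where S': "S' \<subseteq> S" "card S' = k" "\<alpha> \<in> permutations_of_set S'"
        and w: "w = \<alpha> @ sorted_list_of_set (S - S')" by auto
      have a: "set \<alpha> = S'" "distinct \<alpha>" using S'(3) by (auto dest: permutations_of_setD)
      then have "length \<alpha> = k" using S'(2) by (metis distinct_card)
      then have "drop k w = sorted_list_of_set (S - S')" using w by simp
      moreover have "w \<in> permutations_of_set S" using a S'(1) assms(1) w
        by (intro permutations_of_setI) auto
      ultimately show "w \<in> ?T" by simp
    next
      fix w assume "w \<in> ?T"
      then have w: "set w = S" "distinct w" "sorted (drop k w)" by (auto dest: permutations_of_setD)
      then have lw: "length w = card S" by (metis distinct_card)
      let ?a = "take k w"
      have da: "distinct ?a" "distinct (drop k w)" using w(2) by simp_all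
      have la: "length ?a = k" using lw assms(2) by simp
      have ca: "card (set ?a) = k" using da la by (simp add: distinct_card)
      have disj: "set ?a \<inter> set (drop k w) = {}" using w(2) by (metis append_take_drop_id distinct_append)
      have un: "set ?a \<union> set (drop k w) = S" using w(1) by (metis append_take_drop_id set_append)
      have "set (drop k w) = S - set ?a" using disj un by auto
      then have "drop k w = sorted_list_of_set (S - set ?a)"
        using w(3) da(2) assms(1)
        by (metis finite_Diff sorted_distinct_set_unique sorted_list_of_set.distinct_sorted_key_list_of_set
            sorted_list_of_set.set_sorted_key_list_of_set sorted_list_of_set.sorted_sorted_key_list_of_set)
      then have "w = ?phi (set ?a, ?a)" by (metis (no_types, lifting) append_take_drop_id case_prod_conv)
      moreover have "(set ?a, ?a) \<in> ?Sig" using un ca da by (auto intro: permutations_of_setI)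
      ultimately show "w \<in> ?phi ` ?Sig" by blast
    qed
  qed
  also have "\<dots> = (\<Sum>S'\<in>{S'. S' \<subseteq> S \<and> card S' = k}. \<Sum>\<alpha>\<in>permutations_of_set S'. h (\<alpha> @ sorted_list_of_set (S - S')))"
    using finK assms(1) by (subst sum.Sigma) (auto intro: finite_subset simp: case_prod_beta)
  finally show ?thesis .
qed


fun An :: "complex \<Rightarrow> complex \<Rightarrow> complex \<Rightarrow> nat \<Rightarrow> complex" where
  "An q x y 0 = 0"
| "An q x y (Suc n) = ((x - y) ^ Suc n + y * (\<Sum>j\<in>{1..<Suc n}. (x - y) ^ j * qbin q (Suc n) (Suc n - j) * An q x y (Suc n - j))) / (x - y)"


lemma sl_facts: "finite A \<Longrightarrow> sorted (sorted_list_of_set A) \<and> distinct (sorted_list_of_set A) \<and> set (sorted_list_of_set A) = A"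
  by simp

lemma inner_split:
  fixes q x y :: complex
  assumes fS: "finite S" and k: "k \<le> card S"
    and IH: "\<And>S'. S' \<subseteq> S \<Longrightarrow> card S' = k \<Longrightarrow> (\<Sum>w\<in>permutations_of_set S'. q ^ invl w * Pint x y w) = V"
  shows "(\<Sum>w\<in>permutations_of_set S. of_bool (sorted (drop k w)) * (q ^ invl w * Pint x y (take k w))) = qbin q (card S) k * V"
proof -
  have "(\<Sum>w\<in>permutations_of_set S. of_bool (sorted (drop k w)) * (q ^ invl w * Pint x y (take k w))) =
    (\<Sum>S'\<in>{S'. S' \<subseteq> S \<and> card S' = k}. \<Sum>\<alpha>\<in>permutations_of_set S'.
        q ^ invl (\<alpha> @ sorted_list_of_set (S - S')) * Pint x y (take k (\<alpha> @ sorted_list_of_set (S - S'))))"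
    by (rule perm_split2[OF fS k])
  also have "\<dots> = (\<Sum>S'\<in>{S'. S' \<subseteq> S \<and> card S' = k}. q ^ cross S' (S - S') * V)"
  proof (rule sum.cong[OF refl])
    fix S' assume S': "S' \<in> {S'. S' \<subseteq> S \<and> card S' = k}"
    have "(\<Sum>\<alpha>\<in>permutations_of_set S'.
        q ^ invl (\<alpha> @ sorted_list_of_set (S - S')) * Pint x y (take k (\<alpha> @ sorted_list_of_set (S - S')))) =
      (\<Sum>\<alpha>\<in>permutations_of_set S'. q ^ cross S' (S - S') * (q ^ invl \<alpha> * Pint x y \<alpha>))"
    proof (rule sum.cong[OF refl])
      fix \<alpha> assume a: "\<alpha> \<in> permutations_of_set S'"
      have sa: "set \<alpha> = S'" "distinct \<alpha>" using a by (auto dest: permutations_of_setD)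
      have "card S' = k" using S' by simp
      then have la: "length \<alpha> = k" using distinct_card[OF sa(2)] sa(1) by simp
      have fSS: "finite (S - S')" using fS by simp
      have d: "distinct (\<alpha> @ sorted_list_of_set (S - S'))" using sa fSS by auto
      have "invl (\<alpha> @ sorted_list_of_set (S - S')) = invl \<alpha> + cross S' (S - S')"
        using invl_append_distinct[OF d] sa fSS by (simp add: invl_sorted)
      then show "q ^ invl (\<alpha> @ sorted_list_of_set (S - S')) * Pint x y (take k (\<alpha> @ sorted_list_of_set (S - S'))) =
        q ^ cross S' (S - S') * (q ^ invl \<alpha> * Pint x y \<alpha>)"
        using la by (simp add: power_add algebra_simps)
    qed
    also have "\<dots> = q ^ cross S' (S - S') * V" using IH S' by (simp add: sum_distrib_left[symmetric])
    finally show "(\<Sum>\<alpha>\<in>permutations_of_set S'.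
        q ^ invl (\<alpha> @ sorted_list_of_set (S - S')) * Pint x y (take k (\<alpha> @ sorted_list_of_set (S - S')))) =
        q ^ cross S' (S - S') * V" .
  qed
  also have "\<dots> = qbin q (card S) k * V"
    using qbin_subsets[OF fS, of q k] by (simp add: sum_distrib_right[symmetric])
  finally show ?thesis .
qed


lemma part2:
  fixes q x y :: complex
  assumes xy: "x \<noteq> y"
  shows "finite S \<Longrightarrow> 0 \<notin> S \<Longrightarrow> S \<noteq> {} \<Longrightarrow>
    (\<Sum>w\<in>permutations_of_set S. q ^ invl w * Pint x y w) = An q x y (card S)"
proof (induction "card S" arbitrary: S rule: less_induct)
  case less
  let ?n = "card S"
  let ?c = "x - y"
  have c0: "?c \<noteq> 0" using xy by simp
  obtain n' where n': "?n = Suc n'" using less.prems by (metis card_gt_0_iff gr0_conv_Suc)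
  have lw: "length w = ?n" "w \<noteq> []" if "w \<in> permutations_of_set S" for w
  proof -
    have sw: "set w = S" "distinct w" using permutations_of_setD[OF that] by auto
    then show "length w = ?n" using distinct_card by metis
    show "w \<noteq> []" using sw less.prems(3) by auto
  qed
  let ?F = "\<lambda>j w. of_bool (sorted (drop (?n - j) w)) * (q ^ invl w * Pint x y (take (?n - j) w))"
  have "?c * (\<Sum>w\<in>permutations_of_set S. q ^ invl w * Pint x y w) =
     (\<Sum>w\<in>permutations_of_set S. q ^ invl w * (?c * Pint x y w))"
    by (simp add: sum_distrib_left algebra_simps)
  also have "\<dots> = (\<Sum>w\<in>permutations_of_set S. ?c ^ ?n * (of_bool (sorted (drop 0 w)) * q ^ invl w) +
       y * (\<Sum>j\<in>{1..<?n}. ?c ^ j * ?F j w))"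
  proof (rule sum.cong[OF refl])
    fix w assume w: "w \<in> permutations_of_set S"
    show "q ^ invl w * (?c * Pint x y w) = ?c ^ ?n * (of_bool (sorted (drop 0 w)) * q ^ invl w) +
       y * (\<Sum>j\<in>{1..<?n}. ?c ^ j * ?F j w)"
      unfolding pw[OF lw(2)[OF w]] lw(1)[OF w]
      by (simp add: algebra_simps sum_distrib_left)
  qed
  also have "\<dots> = ?c ^ ?n * (\<Sum>w\<in>permutations_of_set S. of_bool (sorted (drop 0 w)) * (q ^ invl w * Pint x y (take 0 w)))
     + y * (\<Sum>j\<in>{1..<?n}. ?c ^ j * (\<Sum>w\<in>permutations_of_set S. ?F j w))"
  proof -
    have e1: "(\<Sum>w\<in>permutations_of_set S. ?c ^ ?n * (of_bool (sorted (drop 0 w)) * q ^ invl w)) =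
      ?c ^ ?n * (\<Sum>w\<in>permutations_of_set S. of_bool (sorted (drop 0 w)) * (q ^ invl w * Pint x y (take 0 w)))"
      by (simp add: sum_distrib_left Pint_def del: sum_of_bool_mult_eq)
    have e2: "(\<Sum>w\<in>permutations_of_set S. y * (\<Sum>j\<in>{1..<?n}. ?c ^ j * ?F j w)) =
      y * (\<Sum>j\<in>{1..<?n}. ?c ^ j * (\<Sum>w\<in>permutations_of_set S. ?F j w))"
    proof -
      have "(\<Sum>w\<in>permutations_of_set S. y * (\<Sum>j\<in>{1..<?n}. ?c ^ j * ?F j w)) =
          y * (\<Sum>w\<in>permutations_of_set S. \<Sum>j\<in>{1..<?n}. ?c ^ j * ?F j w)"
        by (simp only: sum_distrib_left)
      also have "\<dots> = y * (\<Sum>j\<in>{1..<?n}. \<Sum>w\<in>permutations_of_set S. ?c ^ j * ?F j w)"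
        by (subst sum.swap) (rule refl)
      also have "\<dots> = y * (\<Sum>j\<in>{1..<?n}. ?c ^ j * (\<Sum>w\<in>permutations_of_set S. ?F j w))"
        by (simp only: sum_distrib_left)
      finally show ?thesis .
    qed
    show ?thesis unfolding sum.distrib e1 e2 ..
  qed
  also have "(\<Sum>w\<in>permutations_of_set S. of_bool (sorted (drop 0 w)) * (q ^ invl w * Pint x y (take 0 w))) = qbin q ?n 0 * 1"
  proof (rule inner_split[OF less.prems(1)])
    fix S' assume "S' \<subseteq> S" "card S' = 0"
    then have "S' = {}" using less.prems(1) by (metis card_0_eq finite_subset)
    then show "(\<Sum>w\<in>permutations_of_set S'. q ^ invl w * Pint x y w) = 1" by (simp add: Pint_def)
  qed simp
  also have "(\<Sum>j\<in>{1..<?n}. ?c ^ j * (\<Sum>w\<in>permutations_of_set S. ?F j w)) =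
       (\<Sum>j\<in>{1..<?n}. ?c ^ j * (qbin q ?n (?n - j) * An q x y (?n - j)))"
  proof (rule sum.cong[OF refl])
    fix j assume j: "j \<in> {1..<?n}"
    have "(\<Sum>w\<in>permutations_of_set S. ?F j w) = qbin q ?n (?n - j) * An q x y (?n - j)"
    proof (rule inner_split[OF less.prems(1)])
      fix S' assume S': "S' \<subseteq> S" "card S' = ?n - j"
      have "card S' < card S" "finite S'" "0 \<notin> S'" "S' \<noteq> {}" using S' j less.prems by (auto intro: finite_subset)
      then show "(\<Sum>w\<in>permutations_of_set S'. q ^ invl w * Pint x y w) = An q x y (?n - j)"
        using less.hyps S'(2) by metis
    qed simp
    then show "?c ^ j * (\<Sum>w\<in>permutations_of_set S. ?F j w) = ?c ^ j * (qbin q ?n (?n - j) * An q x y (?n - j))" by simp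
  qed
  finally have "?c * (\<Sum>w\<in>permutations_of_set S. q ^ invl w * Pint x y w) =
     ?c ^ ?n + y * (\<Sum>j\<in>{1..<?n}. ?c ^ j * (qbin q ?n (?n - j) * An q x y (?n - j)))" by simp
  then have "(\<Sum>w\<in>permutations_of_set S. q ^ invl w * Pint x y w) =
     (?c ^ ?n + y * (\<Sum>j\<in>{1..<?n}. ?c ^ j * (qbin q ?n (?n - j) * An q x y (?n - j)))) / ?c"
    using c0 by (simp add: field_simps)
  also have "\<dots> = An q x y ?n" unfolding n' by (simp add: mult.assoc)
  finally show ?case .
qed



definition Wn :: "complex \<Rightarrow> complex \<Rightarrow> complex \<Rightarrow> complex \<Rightarrow> nat \<Rightarrow> complex" where
  "Wn q x y z k = (if k = 0 then z else x * y * An q x y k)"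

lemma Wt_Pint:
  assumes "w \<noteq> []" "0 \<notin> set w"
  shows "Wt q x y z w = x * y * q ^ invl w * Pint x y w"
proof -
  let ?D = "\<lambda>a b. (b::nat) < a"
  obtain a r where w: "w = a # r" using assms(1) by (cases w) auto
  have a0: "a \<noteq> 0" using assms(2) w by auto
  have "cnt ?D (0#w) = cnt ?D w" using a0 w by simp
  then have d: "des w = cnt ?D w + 1" using des_split[OF assms(2)] assms(1) by simp
  have c: "cnt ?D w + cnt (\<lambda>a b. \<not> ?D a b) w = length w - 1" by (rule cnt_compl)
  have "Suc (length w) - des w = cnt (\<lambda>a b. \<not> ?D a b) w + 1" using d c assms(1) w by simp
  then show ?thesis using assms(1) d unfolding Wt_def Pint_def by (simp add: algebra_simps)
qed

lemma HW:
  assumes xy: "x \<noteq> y" and fS: "finite S" and S0: "0 \<notin> S"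
  shows "(\<Sum>w\<in>permutations_of_set S. Wt q x y z w) = Wn q x y z (card S)"
proof (cases "S = {}")
  case True then show ?thesis by (simp add: Wt_def Wn_def)
next
  case False
  have "(\<Sum>w\<in>permutations_of_set S. Wt q x y z w) = (\<Sum>w\<in>permutations_of_set S. x * y * (q ^ invl w * Pint x y w))"
  proof (rule sum.cong[OF refl])
    fix w assume w: "w \<in> permutations_of_set S"
    then have "set w = S" using permutations_of_setD by blast
    then have "w \<noteq> []" "0 \<notin> set w" using False S0 by auto
    then show "Wt q x y z w = x * y * (q ^ invl w * Pint x y w)" by (simp add: Wt_Pint mult.assoc)
  qed
  also have "\<dots> = x * y * An q x y (card S)" unfolding sum_distrib_left[symmetric] part2[OF xy fS S0 False] ..
  finally show ?thesis using False fS by (simp add: Wn_def)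
qed

lemma Finv_Fr:
  assumes xy: "x \<noteq> y"
  shows "Finv q x y z b n = Fr (Wn q x y z) q b n"
proof (cases "n = 0")
  case True then show ?thesis by (simp add: Finv_def)
next
  case False
  have "Finv q x y z b n = (\<Sum>s\<in>permutations_of_set {1..n}. Tw q x y z b s)"
    using False unfolding Finv_def Tw_def by simp
  also have "\<dots> = Fr (Wn q x y z) q b (card {1..n})"
    by (rule part1) (auto intro: HW[OF xy])
  finally show ?thesis by simp
qed



definition sc :: "complex \<Rightarrow> complex fps \<Rightarrow> complex fps" where
  "sc a F = Abs_fps (\<lambda>n. a ^ n * fps_nth F n)"

lemma sc_nth[simp]: "fps_nth (sc a F) n = a ^ n * fps_nth F n" by (simp add: sc_def)

lemma sc_mult: "sc a (F * H) = sc a F * sc a H"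
proof (rule fps_ext)
  fix n
  have "fps_nth (sc a (F * H)) n = (\<Sum>i=0..n. a ^ n * (fps_nth F i * fps_nth H (n - i)))" by (simp add: fps_mult_nth sum_distrib_left)
  also have "\<dots> = (\<Sum>i=0..n. (a ^ i * fps_nth F i) * (a ^ (n - i) * fps_nth H (n - i)))"
  proof (rule sum.cong[OF refl])
    fix i assume "i \<in> {0..n}"
    then have "a ^ n = a ^ i * a ^ (n - i)" by (simp flip: power_add)
    then show "a ^ n * (fps_nth F i * fps_nth H (n - i)) = (a ^ i * fps_nth F i) * (a ^ (n - i) * fps_nth H (n - i))" by simp
  qed
  also have "\<dots> = fps_nth (sc a F * sc a H) n" by (simp add: fps_mult_nth)
  finally show "fps_nth (sc a (F * H)) n = fps_nth (sc a F * sc a H) n" .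
qed

lemma sc_add: "sc a (F + H) = sc a F + sc a H" by (rule fps_ext) (simp add: algebra_simps)
lemma sc_diff: "sc a (F - H) = sc a F - sc a H" by (rule fps_ext) (simp add: algebra_simps)
lemma sc_const: "sc a (fps_const c) = fps_const c" by (rule fps_ext) simp
lemma sc_1: "sc a 1 = 1" by (rule fps_ext) simp
lemma sc_X: "sc a fps_X = fps_const a * fps_X"
proof (rule fps_ext)
  fix n show "fps_nth (sc a fps_X) n = fps_nth (fps_const a * fps_X) n"
    by (cases "n = 1") auto
qed
lemma sc_sc: "sc a (sc c F) = sc (a * c) F" by (rule fps_ext) (simp add: power_mult_distrib)
lemma sc_one: "sc 1 F = F" by (rule fps_ext) simp
lemma sc_eq: "sc a (eq_fps q c) = eq_fps q (a * c)"
  by (rule fps_ext) (simp add: eq_fps_def power_mult_distrib)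

lemma qpoch_nz: "norm q < 1 \<Longrightarrow> qpoch q n \<noteq> 0"
proof -
  assume q: "norm q < 1"
  have "1 - q ^ i \<noteq> 0" if "i \<in> {1..n}" for i
  proof
    assume "1 - q ^ i = 0"
    then have "q ^ i = 1" by simp
    then have "norm q ^ i = 1" by (metis norm_one norm_power)
    moreover have "i = Suc (i - 1)" using that by simp
    moreover have "norm q ^ Suc (i - 1) < 1"
    proof -
      have "norm q ^ (i - 1) \<le> 1" using q by (intro power_le_one) auto
      then have "norm q * norm q ^ (i - 1) \<le> norm q" by (simp add: mult_left_le)
      then show ?thesis using q by simp
    qed
    ultimately have "norm q ^ i < 1" by metis
    then show False using \<open>norm q ^ i = 1\<close> by simp
  qed
  then show ?thesis unfolding qpoch_def by (metis finite_atLeastAtMost prod_zero_iff)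
qed

lemma qpoch_0[simp]: "qpoch q 0 = 1" by (simp add: qpoch_def)


definition GG :: "complex \<Rightarrow> complex \<Rightarrow> complex \<Rightarrow> complex \<Rightarrow> complex \<Rightarrow> complex fps" where
  "GG q x y z b = Abs_fps (\<lambda>n. Fr (Wn q x y z) q b n / qpoch q n)"

definition WS :: "complex \<Rightarrow> complex \<Rightarrow> complex \<Rightarrow> complex \<Rightarrow> complex fps" where
  "WS q x y z = Abs_fps (\<lambda>k. Wn q x y z k / qpoch q k)"

definition AS :: "complex \<Rightarrow> complex \<Rightarrow> complex \<Rightarrow> complex fps" where
  "AS q x y = Abs_fps (\<lambda>k. An q x y k / qpoch q k)"

lemma qbin_div:
  assumes q: "norm q < 1" and k: "k \<le> n"
  shows "qbin q n k / qpoch q n = 1 / (qpoch q k * qpoch q (n - k))"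
proof -
  have "qbin q n k * qpoch q k * qpoch q (n - k) = qpoch q n" by (rule qbin_qpoch[OF k])
  then show ?thesis using qpoch_nz[OF q] by (simp add: field_simps)
qed

lemma fac: "(X::complex) - c * X = X * (1 - c)" by (simp add: algebra_simps)

lemma step1:
  assumes q: "norm q < 1"
  shows "GG q x y z b - sc q (GG q x y z b) = fps_X * (fps_const b * (sc q (WS q x y z) * GG q x y z b))"
proof (rule fps_ext)
  fix n
  let ?W = "Wn q x y z"
  show "fps_nth (GG q x y z b - sc q (GG q x y z b)) n = fps_nth (fps_X * (fps_const b * (sc q (WS q x y z) * GG q x y z b))) n"
  proof (cases n)
    case 0 then show ?thesis by (simp add: GG_def)
  next
    case (Suc m)
    have "fps_nth (GG q x y z b - sc q (GG q x y z b)) n = Fr ?W q b (Suc m) / qpoch q (Suc m) - q ^ Suc m * (Fr ?W q b (Suc m) / qpoch q (Suc m))"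
      using Suc by (simp add: GG_def del: Fr.simps)
    also have "\<dots> = Fr ?W q b (Suc m) / qpoch q m"
    proof -
      let ?A = "Fr ?W q b (Suc m)" and ?d = "1 - q ^ Suc m"
      have d0: "?d \<noteq> 0" using qpoch_nz[OF q, of "Suc m"] by (simp add: qpoch_Suc)
      have "?A / qpoch q (Suc m) - q ^ Suc m * (?A / qpoch q (Suc m)) = (?A / qpoch q (Suc m)) * ?d"
        by (rule fac)
      also have "\<dots> = ?A / qpoch q m" unfolding qpoch_Suc using d0 by (simp del: Fr.simps)
      finally show ?thesis .
    qed
    also have "\<dots> = b * (\<Sum>k\<le>m. (qbin q m k / qpoch q m) * (q ^ k * ?W k * Fr ?W q b (m - k)))"
      unfolding Fr.simps by (simp add: sum_divide_distrib sum_distrib_left algebra_simps)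
    also have "\<dots> = b * (\<Sum>k\<le>m. (q ^ k * (?W k / qpoch q k)) * (Fr ?W q b (m - k) / qpoch q (m - k)))"
      by (intro arg_cong[where f="\<lambda>t. b * t"] sum.cong refl) (simp add: qbin_div[OF q])
    also have "\<dots> = b * fps_nth (sc q (WS q x y z) * GG q x y z b) m"
      unfolding fps_mult_nth by (simp add: WS_def GG_def atLeast0AtMost del: Fr.simps)
    also have "\<dots> = fps_nth (fps_X * (fps_const b * (sc q (WS q x y z) * GG q x y z b))) n"
      using Suc by simp
    finally show ?thesis .
  qed
qed


lemma step2:
  assumes q: "norm q < 1" and xy: "x \<noteq> y"
  shows "(fps_const x - fps_const y * eq_fps q (x - y)) * AS q x y = eq_fps q (x - y) - 1"
proof (rule fps_ext)
  fix n
  let ?c = "x - y"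
  let ?a = "\<lambda>k. An q x y k / qpoch q k"
  let ?e = "\<lambda>j. ?c ^ j / qpoch q j"
  have L: "fps_nth ((fps_const x - fps_const y * eq_fps q (x - y)) * AS q x y) n =
      x * ?a n - y * (\<Sum>j=0..n. ?e j * ?a (n - j))"
  proof -
    have "(fps_const x - fps_const y * eq_fps q (x - y)) * AS q x y = fps_const x * AS q x y - fps_const y * (eq_fps q (x - y) * AS q x y)"
      by (simp add: algebra_simps)
    moreover have "fps_nth (eq_fps q (x - y) * AS q x y) n = (\<Sum>j=0..n. ?e j * ?a (n - j))"
      unfolding fps_mult_nth by (simp add: AS_def eq_fps_def)
    ultimately show ?thesis by (simp add: AS_def)
  qed
  show "fps_nth ((fps_const x - fps_const y * eq_fps q (x - y)) * AS q x y) n = fps_nth (eq_fps q (x - y) - 1) n"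
  proof (cases n)
    case 0 then show ?thesis unfolding L by (simp add: eq_fps_def)
  next
    case (Suc m)
    have c0: "?c \<noteq> 0" using xy by simp
    have "{0..n} = insert 0 (insert n {1..<n})" using Suc by auto
    then have "(\<Sum>j=0..n. ?e j * ?a (n - j)) = ?e 0 * ?a n + (?e n * ?a 0 + (\<Sum>j\<in>{1..<n}. ?e j * ?a (n - j)))"
      using Suc by simp
    also have "\<dots> = ?a n + (\<Sum>j\<in>{1..<n}. ?e j * ?a (n - j))" by simp
    finally have s1: "(\<Sum>j=0..n. ?e j * ?a (n - j)) = ?a n + (\<Sum>j\<in>{1..<n}. ?e j * ?a (n - j))" .
    have "?c * An q x y n = ?c ^ n + y * (\<Sum>j\<in>{1..<n}. ?c ^ j * qbin q n (n - j) * An q x y (n - j))"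
      using Suc c0 by simp
    then have "?c * ?a n = ?e n + y * (\<Sum>j\<in>{1..<n}. ?c ^ j * (qbin q n (n - j) / qpoch q n) * An q x y (n - j))"
      by (simp add: sum_divide_distrib sum_distrib_left add_divide_distrib algebra_simps)
    also have "(\<Sum>j\<in>{1..<n}. ?c ^ j * (qbin q n (n - j) / qpoch q n) * An q x y (n - j)) = (\<Sum>j\<in>{1..<n}. ?e j * ?a (n - j))"
    proof (rule sum.cong[OF refl])
      fix j assume j: "j \<in> {1..<n}"
      then have "qbin q n (n - j) / qpoch q n = 1 / (qpoch q (n - j) * qpoch q j)"
        using qbin_div[OF q, of "n - j" n] by simp
      then show "?c ^ j * (qbin q n (n - j) / qpoch q n) * An q x y (n - j) = ?e j * ?a (n - j)" by simp
    qed
    finally have s2: "?c * ?a n = ?e n + y * (\<Sum>j\<in>{1..<n}. ?e j * ?a (n - j))" .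
    have "x * ?a n - y * (\<Sum>j=0..n. ?e j * ?a (n - j)) = ?c * ?a n - y * (\<Sum>j\<in>{1..<n}. ?e j * ?a (n - j))"
      unfolding s1 by (simp add: algebra_simps diff_divide_distrib)
    also have "\<dots> = ?e n" unfolding s2 by simp
    finally show ?thesis unfolding L using Suc by (simp add: eq_fps_def)
  qed
qed


lemma alg3:
  fixes r xx yy zz bb B1 B2 E A X :: "'a::comm_ring_1"
  assumes "r * xx = yy" "B1 = bb * (zz - yy)" "B2 = bb * (xx - zz)" "(xx - yy * E) * A = E - 1"
  shows "1 - B1 * X - r * (1 + B2 * X) * E = (1 - r * E) * (1 - X * (bb * (zz + xx * yy * A)))"
proof -
  have L: "1 - B1 * X - r * (1 + B2 * X) * E = 1 - bb * (zz - yy) * X - r * E - bb * X * E * (r * xx) + r * bb * zz * X * E"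
    unfolding assms(2,3) by (simp add: algebra_simps)
  have R: "(1 - r * E) * (1 - X * (bb * (zz + xx * yy * A))) = 1 - r * E - X * bb * zz * (1 - r * E) - X * bb * ((1 - r * E) * (xx * yy * A))"
    by (simp add: algebra_simps)
  have "(1 - r * E) * (xx * yy * A) = yy * ((xx - E * (r * xx)) * A)" by (simp add: algebra_simps)
  also have "\<dots> = yy * (E - 1)" unfolding assms(1) using assms(4) by (simp add: mult.commute)
  finally have h: "(1 - r * E) * (xx * yy * A) = yy * (E - 1)" .
  show ?thesis unfolding L R h assms(1) by (simp add: algebra_simps)
qed

definition Dk :: "complex \<Rightarrow> complex \<Rightarrow> complex \<Rightarrow> complex \<Rightarrow> complex \<Rightarrow> nat \<Rightarrow> complex fps" where
  "Dk q x y z b k = 1 - fps_const (b * q ^ k * (z - y)) * fps_X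
     - fps_const (y / x) * (1 + fps_const (b * q ^ k * (x - z)) * fps_X) * eq_fps q ((x - y) * q ^ (k + 1))"

definition Nk :: "complex \<Rightarrow> complex \<Rightarrow> complex \<Rightarrow> nat \<Rightarrow> complex fps" where
  "Nk q x y k = 1 - fps_const (y / x) * eq_fps q ((x - y) * q ^ (k + 1))"

lemma pf_eq: "prod_factor q x y z b k = Nk q x y k / Dk q x y z b k"
  unfolding prod_factor_def Let_def Nk_def Dk_def ..

lemma WS_AS: "WS q x y z = fps_const z + fps_const (x * y) * AS q x y"
proof (rule fps_ext)
  fix n show "fps_nth (WS q x y z) n = fps_nth (fps_const z + fps_const (x * y) * AS q x y) n"
    by (cases n) (simp_all add: WS_def AS_def Wn_def)
qed

lemma step3:
  assumes q: "norm q < 1" and xy: "x \<noteq> y" and x0: "x \<noteq> 0"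
  shows "Dk q x y z b 0 * GG q x y z b = Nk q x y 0 * sc q (GG q x y z b)"
proof -
  let ?E = "eq_fps q ((x - y) * q ^ (0 + 1))"
  let ?A = "sc q (AS q x y)"
  have E: "sc q (eq_fps q (x - y)) = ?E" by (simp add: sc_eq mult.commute)
  have s2: "(fps_const x - fps_const y * ?E) * ?A = ?E - 1"
    using arg_cong[OF step2[OF q xy], of "sc q"] unfolding sc_mult sc_diff sc_const sc_1 E .
  have s1: "sc q (GG q x y z b) = GG q x y z b - fps_X * (fps_const b * (sc q (WS q x y z) * GG q x y z b))"
    using step1[OF q, of x y z b] by (simp add: algebra_simps)
  have sW: "sc q (WS q x y z) = fps_const z + fps_const x * fps_const y * ?A"
    unfolding WS_AS sc_add sc_mult sc_const by simp
  have r: "fps_const (y / x) * fps_const x = fps_const y" using x0 by simp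
  have D: "Dk q x y z b 0 = (1 - fps_const (y / x) * ?E) * (1 - fps_X * (fps_const b * (fps_const z + fps_const x * fps_const y * ?A)))"
    unfolding Dk_def
    by (rule alg3[OF r _ _ s2]) simp_all
  have ring4: "(N * (1 - X * (bb * W))) * G = N * (G - X * (bb * (W * G)))" for N X bb W G :: "complex fps"
    by (simp add: algebra_simps)
  show ?thesis unfolding D s1 sW Nk_def by (rule ring4)
qed


lemma cX: "fps_const c * (fps_const d * fps_X) = fps_const (c * d) * (fps_X :: complex fps)"
  by (simp add: mult.assoc[symmetric])

lemma sc_Dk: "sc (q ^ k) (Dk q x y z b 0) = Dk q x y z b k"
proof -
  have e: "q ^ k * ((x - y) * q ^ (0 + 1)) = (x - y) * q ^ (k + 1)" by (simp add: algebra_simps)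
  have m1: "b * q ^ 0 * (z - y) * q ^ k = b * q ^ k * (z - y)" by simp
  have m2: "b * q ^ 0 * (x - z) * q ^ k = b * q ^ k * (x - z)" by simp
  show ?thesis unfolding Dk_def sc_diff sc_mult sc_const sc_1 sc_X sc_add sc_eq e cX m1 m2 ..
qed

lemma sc_Nk: "sc (q ^ k) (Nk q x y 0) = Nk q x y k"
proof -
  have e: "q ^ k * ((x - y) * q ^ (0 + 1)) = (x - y) * q ^ (k + 1)" by (simp add: algebra_simps)
  show ?thesis unfolding Nk_def sc_diff sc_mult sc_const sc_1 sc_eq e ..
qed

lemma Dk0: "x \<noteq> 0 \<Longrightarrow> x \<noteq> y \<Longrightarrow> fps_nth (Dk q x y z b k) 0 \<noteq> 0"
  by (simp add: Dk_def eq_fps_def field_simps)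

lemma pf_mult: "x \<noteq> 0 \<Longrightarrow> x \<noteq> y \<Longrightarrow> prod_factor q x y z b k * Dk q x y z b k = Nk q x y k"
  unfolding pf_eq using Dk0 by (simp add: fps_divide_unit inverse_mult_eq_1 mult.assoc)

lemma step4:
  assumes q: "norm q < 1" and xy: "x \<noteq> y" and x0: "x \<noteq> 0"
  shows "sc (q ^ k) (GG q x y z b) = prod_factor q x y z b k * sc (q ^ Suc k) (GG q x y z b)"
proof -
  have "sc (q ^ k) (Dk q x y z b 0 * GG q x y z b) = sc (q ^ k) (Nk q x y 0 * sc q (GG q x y z b))"
    using step3[OF q xy x0] by simp
  then have "Dk q x y z b k * sc (q ^ k) (GG q x y z b) = Nk q x y k * sc (q ^ Suc k) (GG q x y z b)"
    unfolding sc_mult sc_Dk sc_Nk sc_sc by (simp add: mult.commute)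
  also have "\<dots> = Dk q x y z b k * (prod_factor q x y z b k * sc (q ^ Suc k) (GG q x y z b))"
    using pf_mult[OF x0 xy, of q z b k] by (simp add: algebra_simps)
  finally have eq: "Dk q x y z b k * sc (q ^ k) (GG q x y z b) = Dk q x y z b k * (prod_factor q x y z b k * sc (q ^ Suc k) (GG q x y z b))" .
  have "Dk q x y z b k \<noteq> 0"
  proof
    assume "Dk q x y z b k = 0"
    then have "fps_nth (Dk q x y z b k) 0 = 0" by simp
    then show False using Dk0[OF x0 xy, of q z b k] by simp
  qed
  then show ?thesis using eq by simp
qed

lemma step5:
  assumes q: "norm q < 1" and xy: "x \<noteq> y" and x0: "x \<noteq> 0"
  shows "GG q x y z b = (\<Prod>k<K. prod_factor q x y z b k) * sc (q ^ K) (GG q x y z b)"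
proof (induction K)
  case 0 then show ?case by (simp add: sc_one)
next
  case (Suc K)
  then show ?case using step4[OF q xy x0, of K z b] by (simp add: mult.assoc)
qed


lemma norm_pow_lt1: "norm (q::complex) < 1 \<Longrightarrow> j \<ge> 1 \<Longrightarrow> norm (q ^ j) < (1::real)"
proof -
  assume q: "norm q < 1" and j: "j \<ge> 1"
  have "norm q ^ (j - 1) \<le> 1" using q by (intro power_le_one) auto
  then have "norm q * norm q ^ (j - 1) \<le> norm q" by (simp add: mult_left_le)
  moreover obtain k where "j = Suc k" using j by (cases j) auto
  then have "norm q * norm q ^ (j - 1) = norm (q ^ j)" by (simp add: norm_power norm_mult)
  ultimately show ?thesis using q by simp
qed

lemma limit_main:
  assumes q: "norm q < 1" and xy: "x \<noteq> y" and x0: "x \<noteq> 0"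
  shows "(\<lambda>K. fps_nth (\<Prod>k<K. prod_factor q x y z b k) n) \<longlonglongrightarrow> fps_nth (GG q x y z b) n"
proof (induction n rule: less_induct)
  case (less n)
  let ?P = "\<lambda>K. \<Prod>k<K. prod_factor q x y z b k"
  let ?g = "fps_nth (GG q x y z b)"
  have g0: "?g 0 = 1" by (simp add: GG_def)
  have decomp: "fps_nth (?P K) n = ?g n - (\<Sum>i\<in>{0..<n}. fps_nth (?P K) i * ((q ^ (n - i)) ^ K * ?g (n - i)))" for K
  proof -
    have "?g n = fps_nth (?P K * sc (q ^ K) (GG q x y z b)) n" using step5[OF q xy x0, of z b K] by simp
    also have "\<dots> = (\<Sum>i=0..n. fps_nth (?P K) i * ((q ^ K) ^ (n - i) * ?g (n - i)))" by (simp add: fps_mult_nth)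
    also have "\<dots> = (\<Sum>i\<in>{0..<n}. fps_nth (?P K) i * ((q ^ (n - i)) ^ K * ?g (n - i))) + fps_nth (?P K) n"
      by (simp add: sum.atLeast0_atMost_Suc atLeast0AtMost[symmetric] atLeastLessThanSuc_atLeastAtMost[symmetric] g0
          power_mult[symmetric] mult.commute[of K])
    finally show ?thesis by simp
  qed
  have "(\<lambda>K. \<Sum>i\<in>{0..<n}. fps_nth (?P K) i * ((q ^ (n - i)) ^ K * ?g (n - i))) \<longlonglongrightarrow> (\<Sum>i\<in>{0..<n}. ?g i * (0 * ?g (n - i)))"
  proof (intro tendsto_sum tendsto_mult tendsto_const)
    fix i assume i: "i \<in> {0..<n}"
    then show "(\<lambda>K. fps_nth (?P K) i) \<longlonglongrightarrow> ?g i" using less by simp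
    show "(\<lambda>K. (q ^ (n - i)) ^ K) \<longlonglongrightarrow> 0" using i by (intro LIMSEQ_power_zero norm_pow_lt1[OF q]) auto
  qed
  then have "(\<lambda>K. \<Sum>i\<in>{0..<n}. fps_nth (?P K) i * ((q ^ (n - i)) ^ K * ?g (n - i))) \<longlonglongrightarrow> 0" by simp
  then have "(\<lambda>K. ?g n - (\<Sum>i\<in>{0..<n}. fps_nth (?P K) i * ((q ^ (n - i)) ^ K * ?g (n - i)))) \<longlonglongrightarrow> ?g n - 0"
    by (intro tendsto_diff tendsto_const)
  then show ?case unfolding decomp by simp
qed

theorem theorem5p2:
  fixes q x y z b :: complex and n :: nat
  assumes "norm q < 1" and "x \<noteq> 0" and "x \<noteq> y"
  shows "(\<lambda>K. fps_nth (\<Prod>k<K. prod_factor q x y z b k) n) \<longlonglongrightarrow> Finv q x y z b n / qpoch q n"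
proof -
  have "Finv q x y z b n / qpoch q n = fps_nth (GG q x y z b) n"
    using Finv_Fr[OF assms(3)] by (simp add: GG_def)
  then show ?thesis using limit_main[OF assms(1) assms(3) assms(2)] by simp
qed

end
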